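(* Let $K$ be an algebraically closed field, $\mathcal{T}$ a $\operatorname{Hom}$-finite Krull–Schmidt triangulated $K$-category with Jacobson radical $\mathcal{J}$, and $\mathcal{I}$ a functorially finite ideal. Let $X$ and $Z$ be indecomposable and $Y=\coprod_{i=1}^nY_i^{m_i}$ with $Y_i$ indecomposable and $Y_i\not\cong Y_j$ for $i\neq j$. (1) A morphism $f=(f_{ij})^t:X\to Y$, with components $f_{ij}:X\to Y_i$ ($1\le j\le m_i$) lying in $\mathcal{I}$, is an $\mathcal{I}$-source map provided (i) for each $i$, the classes $\bar f_{i1},\dots,\bar f_{im_i}$ form a basis of $\operatorname{Irr}^-_{\mathcal{I}}(X,Y_i)$, and (ii) whenever $\operatorname{Irr}^-_{\mathcal{I}}(X,Y')\neq0$ with $Y'$ indecomposable, $Y'\cong Y_i$ for some $i$. (2) A morphism $g=(g_{ij}):Y\to Z$, with components $g_{ij}:Y_i\to Z$ lying in $\mathcal{I}$, is an $\mathcal{I}$-sink map provided (i) for each $i$, the classes $\bar g_{i1},\dots,\bar g_{im_i}$ form a basis of $\operatorname{Irr}^+_{\mathcal{I}}(Y_i,Z)$, and (ii) whenever $\operatorname{Irr}^+_{\mathcal{I}}(Y',Z)\neq0$ with $Y'$ indecomposable, $Y'\cong Y_i$ for some $i$.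
   Context: Composition of $b$ then $a$ is $ab$. An ideal: subgroups $\mathcal{I}(X,Y)\subseteq\operatorname{Hom}(X,Y)$ closed under composition; functorially finite if every object has left and right $\mathcal{I}$-approximations (morphisms of $\mathcal{I}$ starting/ending at the object through which all such morphisms of $\mathcal{I}$ factor). For ideals $\mathcal{A},\mathcal{B}$, $\mathcal{A}\mathcal{B}$ is the ideal of finite sums of composites $ab$, $a\in\mathcal{A}$, $b\in\mathcal{B}$. For indecomposable $A,B$: $\operatorname{Irr}^-_{\mathcal{I}}(A,B)=\mathcal{I}(A,B)/(\mathcal{J}\mathcal{I})(A,B)$ and $\operatorname{Irr}^+_{\mathcal{I}}(A,B)=\mathcal{I}(A,B)/(\mathcal{I}\mathcal{J})(A,B)$. An $\mathcal{I}$-source map is a left minimal left $\mathcal{I}$-approximation ($f$ left minimal: $gf=f$ implies $g$ invertible); an $\mathcal{I}$-sink map is a right minimal right $\mathcal{I}$-approximation. *)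

theory Defs
  imports "HOL-Computational_Algebra.Polynomial"
begin

definition alg_closed :: "'k::field itself \<Rightarrow> bool" where
  "alg_closed _ \<longleftrightarrow> (\<forall>p::'k poly. degree p > 0 \<longrightarrow> (\<exists>x. poly p x = 0))"

section \<open>K-linear categories (morphisms carry their domain/codomain)\<close>

text \<open>Composition convention: cmp C a b is "first b, then a", i.e. the composite ab.\<close>

record ('o, 'm, 'k) kcat =
  Obj :: "'o set"
  Hom :: "'o \<Rightarrow> 'o \<Rightarrow> 'm set"
  cmp :: "'m \<Rightarrow> 'm \<Rightarrow> 'm"
  idt :: "'o \<Rightarrow> 'm"
  madd :: "'m \<Rightarrow> 'm \<Rightarrow> 'm"
  mzero :: "'o \<Rightarrow> 'o \<Rightarrow> 'm"
  smul :: "'k \<Rightarrow> 'm \<Rightarrow> 'm"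

definition mneg :: "('o, 'm, 'k::field) kcat \<Rightarrow> 'm \<Rightarrow> 'm" where
  "mneg C f = smul C (-1) f"

definition msub :: "('o, 'm, 'k::field) kcat \<Rightarrow> 'm \<Rightarrow> 'm \<Rightarrow> 'm" where
  "msub C f g = madd C f (mneg C g)"

definition k_linear_cat :: "('o, 'm, 'k::field) kcat \<Rightarrow> bool" where
  "k_linear_cat C \<longleftrightarrow>
     (\<forall>X Y. Hom C X Y \<noteq> {} \<longrightarrow> X \<in> Obj C \<and> Y \<in> Obj C) \<and>
     (\<forall>X Y X' Y'. Hom C X Y \<inter> Hom C X' Y' \<noteq> {} \<longrightarrow> X = X' \<and> Y = Y') \<and>
     (\<forall>X\<in>Obj C. idt C X \<in> Hom C X X) \<and>
     (\<forall>X Y Z f g. f \<in> Hom C X Y \<longrightarrow> g \<in> Hom C Y Z \<longrightarrow> cmp C g f \<in> Hom C X Z) \<and>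
     (\<forall>W X Y Z f g h. f \<in> Hom C W X \<longrightarrow> g \<in> Hom C X Y \<longrightarrow> h \<in> Hom C Y Z \<longrightarrow>
        cmp C h (cmp C g f) = cmp C (cmp C h g) f) \<and>
     (\<forall>X Y f. f \<in> Hom C X Y \<longrightarrow> cmp C (idt C Y) f = f \<and> cmp C f (idt C X) = f) \<and>
     (\<forall>X\<in>Obj C. \<forall>Y\<in>Obj C.
        mzero C X Y \<in> Hom C X Y \<and>
        (\<forall>f\<in>Hom C X Y. \<forall>g\<in>Hom C X Y. madd C f g \<in> Hom C X Y) \<and>
        (\<forall>a f. f \<in> Hom C X Y \<longrightarrow> smul C a f \<in> Hom C X Y) \<and>
        (\<forall>f\<in>Hom C X Y. \<forall>g\<in>Hom C X Y. \<forall>h\<in>Hom C X Y.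
            madd C (madd C f g) h = madd C f (madd C g h)) \<and>
        (\<forall>f\<in>Hom C X Y. \<forall>g\<in>Hom C X Y. madd C f g = madd C g f) \<and>
        (\<forall>f\<in>Hom C X Y. madd C (mzero C X Y) f = f) \<and>
        (\<forall>f\<in>Hom C X Y. madd C f (mneg C f) = mzero C X Y) \<and>
        (\<forall>a. \<forall>f\<in>Hom C X Y. \<forall>g\<in>Hom C X Y.
            smul C a (madd C f g) = madd C (smul C a f) (smul C a g)) \<and>
        (\<forall>a b. \<forall>f\<in>Hom C X Y. smul C (a + b) f = madd C (smul C a f) (smul C b f)) \<and>
        (\<forall>a b. \<forall>f\<in>Hom C X Y. smul C (a * b) f = smul C a (smul C b f)) \<and>
        (\<forall>f\<in>Hom C X Y. smul C 1 f = f)) \<and>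
     (\<forall>X Y Z f g g' a. f \<in> Hom C X Y \<longrightarrow> g \<in> Hom C Y Z \<longrightarrow> g' \<in> Hom C Y Z \<longrightarrow>
        cmp C (madd C g g') f = madd C (cmp C g f) (cmp C g' f) \<and>
        cmp C (smul C a g) f = smul C a (cmp C g f)) \<and>
     (\<forall>X Y Z f f' g a. f \<in> Hom C X Y \<longrightarrow> f' \<in> Hom C X Y \<longrightarrow> g \<in> Hom C Y Z \<longrightarrow>
        cmp C g (madd C f f') = madd C (cmp C g f) (cmp C g f') \<and>
        cmp C g (smul C a f) = smul C a (cmp C g f))"

definition lsum :: "('o, 'm, 'k) kcat \<Rightarrow> 'o \<Rightarrow> 'o \<Rightarrow> 'm list \<Rightarrow> 'm" where
  "lsum C X Y fs = foldr (madd C) fs (mzero C X Y)"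

definition lincomb :: "('o, 'm, 'k) kcat \<Rightarrow> 'o \<Rightarrow> 'o \<Rightarrow> 'k list \<Rightarrow> 'm list \<Rightarrow> 'm" where
  "lincomb C X Y cs fs = lsum C X Y (map (\<lambda>(c, f). smul C c f) (zip cs fs))"

definition is_iso :: "('o, 'm, 'k) kcat \<Rightarrow> 'o \<Rightarrow> 'o \<Rightarrow> 'm \<Rightarrow> bool" where
  "is_iso C X Y f \<longleftrightarrow> f \<in> Hom C X Y \<and>
     (\<exists>g\<in>Hom C Y X. cmp C g f = idt C X \<and> cmp C f g = idt C Y)"

definition isomorphic :: "('o, 'm, 'k) kcat \<Rightarrow> 'o \<Rightarrow> 'o \<Rightarrow> bool" where
  "isomorphic C X Y \<longleftrightarrow> (\<exists>f. is_iso C X Y f)"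

definition is_zero_obj :: "('o, 'm, 'k) kcat \<Rightarrow> 'o \<Rightarrow> bool" where
  "is_zero_obj C N \<longleftrightarrow> N \<in> Obj C \<and> idt C N = mzero C N N"

definition is_biproduct ::
  "('o, 'm, 'k) kcat \<Rightarrow> 'i list \<Rightarrow> ('i \<Rightarrow> 'o) \<Rightarrow> 'o \<Rightarrow> ('i \<Rightarrow> 'm) \<Rightarrow> ('i \<Rightarrow> 'm) \<Rightarrow> bool" where
  "is_biproduct C idx A Y \<iota> \<pi> \<longleftrightarrow>
     Y \<in> Obj C \<and> distinct idx \<and>
     (\<forall>a\<in>set idx. A a \<in> Obj C \<and> \<iota> a \<in> Hom C (A a) Y \<and> \<pi> a \<in> Hom C Y (A a)) \<and>
     (\<forall>a\<in>set idx. \<forall>b\<in>set idx.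
        cmp C (\<pi> a) (\<iota> b) = (if a = b then idt C (A a) else mzero C (A b) (A a))) \<and>
     lsum C Y Y (map (\<lambda>a. cmp C (\<iota> a) (\<pi> a)) idx) = idt C Y"

definition additive :: "('o, 'm, 'k) kcat \<Rightarrow> bool" where
  "additive C \<longleftrightarrow> (\<forall>As. set As \<subseteq> Obj C \<longrightarrow>
     (\<exists>Y (\<iota>::nat \<Rightarrow> 'm) \<pi>. is_biproduct C [0..<length As] (\<lambda>i. As ! i) Y \<iota> \<pi>))"

definition indecomposable :: "('o, 'm, 'k) kcat \<Rightarrow> 'o \<Rightarrow> bool" where
  "indecomposable C X \<longleftrightarrow> X \<in> Obj C \<and> \<not> is_zero_obj C X \<and>
     (\<forall>A (\<iota>::nat \<Rightarrow> 'm) \<pi>. is_biproduct C [0, 1] A X \<iota> \<pi> \<longrightarrow>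
        is_zero_obj C (A 0) \<or> is_zero_obj C (A 1))"

definition local_end :: "('o, 'm, 'k) kcat \<Rightarrow> 'o \<Rightarrow> bool" where
  "local_end C X \<longleftrightarrow> X \<in> Obj C \<and> idt C X \<noteq> mzero C X X \<and>
     (\<forall>a\<in>Hom C X X. \<forall>b\<in>Hom C X X.
        \<not> is_iso C X X a \<and> \<not> is_iso C X X b \<longrightarrow> \<not> is_iso C X X (madd C a b))"

definition krull_schmidt :: "('o, 'm, 'k) kcat \<Rightarrow> bool" where
  "krull_schmidt C \<longleftrightarrow> additive C \<and>
     (\<forall>X\<in>Obj C. \<exists>As (\<iota>::nat \<Rightarrow> 'm) \<pi>. (\<forall>A\<in>set As. local_end C A) \<and>
        is_biproduct C [0..<length As] (\<lambda>i. As ! i) X \<iota> \<pi>)"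

definition hom_finite :: "('o, 'm, 'k) kcat \<Rightarrow> bool" where
  "hom_finite C \<longleftrightarrow> (\<forall>X\<in>Obj C. \<forall>Y\<in>Obj C. \<exists>fs. set fs \<subseteq> Hom C X Y \<and>
     (\<forall>h\<in>Hom C X Y. \<exists>cs. length cs = length fs \<and> h = lincomb C X Y cs fs))"

definition shift_functor ::
  "('o, 'm, 'k::field) kcat \<Rightarrow> ('o \<Rightarrow> 'o) \<Rightarrow> ('m \<Rightarrow> 'm) \<Rightarrow> bool" where
  "shift_functor C sh shm \<longleftrightarrow>
     (\<forall>X\<in>Obj C. sh X \<in> Obj C \<and> shm (idt C X) = idt C (sh X)) \<and>
     (\<forall>X Y f. f \<in> Hom C X Y \<longrightarrow> shm f \<in> Hom C (sh X) (sh Y)) \<and>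
     (\<forall>X Y Z f g. f \<in> Hom C X Y \<longrightarrow> g \<in> Hom C Y Z \<longrightarrow> shm (cmp C g f) = cmp C (shm g) (shm f)) \<and>
     (\<forall>X Y f g a. f \<in> Hom C X Y \<longrightarrow> g \<in> Hom C X Y \<longrightarrow>
        shm (madd C f g) = madd C (shm f) (shm g) \<and> shm (smul C a f) = smul C a (shm f)) \<and>
     (\<forall>X\<in>Obj C. \<forall>Y\<in>Obj C. bij_betw shm (Hom C X Y) (Hom C (sh X) (sh Y))) \<and>
     (\<forall>Y\<in>Obj C. \<exists>X\<in>Obj C. isomorphic C (sh X) Y)"

definition tri_wf ::
  "('o, 'm, 'k) kcat \<Rightarrow> ('o \<Rightarrow> 'o) \<Rightarrow> 'o \<Rightarrow> 'o \<Rightarrow> 'o \<Rightarrow> 'm \<Rightarrow> 'm \<Rightarrow> 'm \<Rightarrow> bool" where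
  "tri_wf C sh X Y Z u v w \<longleftrightarrow> X \<in> Obj C \<and> Y \<in> Obj C \<and> Z \<in> Obj C \<and>
     u \<in> Hom C X Y \<and> v \<in> Hom C Y Z \<and> w \<in> Hom C Z (sh X)"

definition tri_morph ::
  "('o, 'm, 'k) kcat \<Rightarrow> ('m \<Rightarrow> 'm) \<Rightarrow> 'o \<Rightarrow> 'o \<Rightarrow> 'o \<Rightarrow> 'm \<Rightarrow> 'm \<Rightarrow> 'm \<Rightarrow>
     'o \<Rightarrow> 'o \<Rightarrow> 'o \<Rightarrow> 'm \<Rightarrow> 'm \<Rightarrow> 'm \<Rightarrow> 'm \<Rightarrow> 'm \<Rightarrow> 'm \<Rightarrow> bool" where
  "tri_morph C shm X Y Z u v w X' Y' Z' u' v' w' a b c \<longleftrightarrow>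
     a \<in> Hom C X X' \<and> b \<in> Hom C Y Y' \<and> c \<in> Hom C Z Z' \<and>
     cmp C b u = cmp C u' a \<and> cmp C c v = cmp C v' b \<and> cmp C (shm a) w = cmp C w' c"

definition triangulated ::
  "('o, 'm, 'k::field) kcat \<Rightarrow> ('o \<Rightarrow> 'o) \<Rightarrow> ('m \<Rightarrow> 'm) \<Rightarrow>
     ('o \<times> 'o \<times> 'o \<times> 'm \<times> 'm \<times> 'm) set \<Rightarrow> bool" where
  "triangulated C sh shm \<Delta> \<longleftrightarrow>
     k_linear_cat C \<and> additive C \<and> shift_functor C sh shm \<and>
     (\<forall>X Y Z u v w. (X, Y, Z, u, v, w) \<in> \<Delta> \<longrightarrow> tri_wf C sh X Y Z u v w) \<and>
     \<comment> \<open>TR1: closure under isomorphism of triangles\<close>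
     (\<forall>X Y Z u v w X' Y' Z' u' v' w' a b c.
        (X, Y, Z, u, v, w) \<in> \<Delta> \<longrightarrow> tri_wf C sh X' Y' Z' u' v' w' \<longrightarrow>
        tri_morph C shm X Y Z u v w X' Y' Z' u' v' w' a b c \<longrightarrow>
        is_iso C X X' a \<longrightarrow> is_iso C Y Y' b \<longrightarrow> is_iso C Z Z' c \<longrightarrow>
        (X', Y', Z', u', v', w') \<in> \<Delta>) \<and>
     \<comment> \<open>TR1: trivial triangles\<close>
     (\<forall>X\<in>Obj C. \<forall>N0. is_zero_obj C N0 \<longrightarrow>
        (X, X, N0, idt C X, mzero C X N0, mzero C N0 (sh X)) \<in> \<Delta>) \<and>
     \<comment> \<open>TR1: every morphism embeds in a triangle\<close>
     (\<forall>X Y u. u \<in> Hom C X Y \<longrightarrow> (\<exists>Z v w. (X, Y, Z, u, v, w) \<in> \<Delta>)) \<and>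
     \<comment> \<open>TR2: rotation\<close>
     (\<forall>X Y Z u v w. tri_wf C sh X Y Z u v w \<longrightarrow>
        ((X, Y, Z, u, v, w) \<in> \<Delta> \<longleftrightarrow> (Y, Z, sh X, v, w, mneg C (shm u)) \<in> \<Delta>)) \<and>
     \<comment> \<open>TR3: completion of morphisms of triangles\<close>
     (\<forall>X Y Z u v w X' Y' Z' u' v' w' a b.
        (X, Y, Z, u, v, w) \<in> \<Delta> \<longrightarrow> (X', Y', Z', u', v', w') \<in> \<Delta> \<longrightarrow>
        a \<in> Hom C X X' \<longrightarrow> b \<in> Hom C Y Y' \<longrightarrow> cmp C b u = cmp C u' a \<longrightarrow>
        (\<exists>c. tri_morph C shm X Y Z u v w X' Y' Z' u' v' w' a b c)) \<and>
     \<comment> \<open>TR4: octahedral axiom\<close>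
     (\<forall>X Y Z u v Z' j k X' l i Y' m n.
        (X, Y, Z', u, j, k) \<in> \<Delta> \<longrightarrow> (Y, Z, X', v, l, i) \<in> \<Delta> \<longrightarrow>
        (X, Z, Y', cmp C v u, m, n) \<in> \<Delta> \<longrightarrow>
        (\<exists>f g. (Z', Y', X', f, g, cmp C (shm j) i) \<in> \<Delta> \<and>
           cmp C f j = cmp C m v \<and> cmp C n f = k \<and> cmp C g m = l \<and>
           cmp C i g = cmp C (shm u) n))"

definition is_ideal :: "('o, 'm, 'k::field) kcat \<Rightarrow> ('o \<Rightarrow> 'o \<Rightarrow> 'm set) \<Rightarrow> bool" where
  "is_ideal C I \<longleftrightarrow>
     (\<forall>X Y. I X Y \<subseteq> Hom C X Y) \<and>
     (\<forall>X\<in>Obj C. \<forall>Y\<in>Obj C. mzero C X Y \<in> I X Y \<and>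
        (\<forall>f\<in>I X Y. \<forall>g\<in>I X Y. madd C f g \<in> I X Y) \<and> (\<forall>f\<in>I X Y. mneg C f \<in> I X Y)) \<and>
     (\<forall>W X Y f h. f \<in> I X Y \<longrightarrow> h \<in> Hom C W X \<longrightarrow> cmp C f h \<in> I W Y) \<and>
     (\<forall>X Y Z f g. f \<in> I X Y \<longrightarrow> g \<in> Hom C Y Z \<longrightarrow> cmp C g f \<in> I X Z)"

definition jac_rad :: "('o, 'm, 'k::field) kcat \<Rightarrow> 'o \<Rightarrow> 'o \<Rightarrow> 'm set" where
  "jac_rad C X Y = {f \<in> Hom C X Y. \<forall>g\<in>Hom C Y X. is_iso C X X (msub C (idt C X) (cmp C g f))}"

inductive_set ideal_prod ::
  "('o, 'm, 'k) kcat \<Rightarrow> ('o \<Rightarrow> 'o \<Rightarrow> 'm set) \<Rightarrow> ('o \<Rightarrow> 'o \<Rightarrow> 'm set) \<Rightarrow> 'o \<Rightarrow> 'o \<Rightarrow> 'm set"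
  for C A B X Y where
    ip_zero: "mzero C X Y \<in> ideal_prod C A B X Y"
  | ip_step: "b \<in> B X W \<Longrightarrow> a \<in> A W Y \<Longrightarrow> s \<in> ideal_prod C A B X Y \<Longrightarrow>
              madd C (cmp C a b) s \<in> ideal_prod C A B X Y"

definition left_approx :: "('o, 'm, 'k) kcat \<Rightarrow> ('o \<Rightarrow> 'o \<Rightarrow> 'm set) \<Rightarrow> 'o \<Rightarrow> 'o \<Rightarrow> 'm \<Rightarrow> bool" where
  "left_approx C I X A f \<longleftrightarrow> f \<in> I X A \<and>
     (\<forall>A' f'. f' \<in> I X A' \<longrightarrow> (\<exists>h\<in>Hom C A A'. f' = cmp C h f))"

definition right_approx :: "('o, 'm, 'k) kcat \<Rightarrow> ('o \<Rightarrow> 'o \<Rightarrow> 'm set) \<Rightarrow> 'o \<Rightarrow> 'o \<Rightarrow> 'm \<Rightarrow> bool" where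
  "right_approx C I A X g \<longleftrightarrow> g \<in> I A X \<and>
     (\<forall>A' g'. g' \<in> I A' X \<longrightarrow> (\<exists>h\<in>Hom C A' A. g' = cmp C g h))"

definition functorially_finite :: "('o, 'm, 'k) kcat \<Rightarrow> ('o \<Rightarrow> 'o \<Rightarrow> 'm set) \<Rightarrow> bool" where
  "functorially_finite C I \<longleftrightarrow> (\<forall>X\<in>Obj C.
     (\<exists>A f. left_approx C I X A f) \<and> (\<exists>A g. right_approx C I A X g))"

definition left_minimal :: "('o, 'm, 'k) kcat \<Rightarrow> 'o \<Rightarrow> 'o \<Rightarrow> 'm \<Rightarrow> bool" where
  "left_minimal C X Y f \<longleftrightarrow> f \<in> Hom C X Y \<and>
     (\<forall>g\<in>Hom C Y Y. cmp C g f = f \<longrightarrow> is_iso C Y Y g)"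

definition right_minimal :: "('o, 'm, 'k) kcat \<Rightarrow> 'o \<Rightarrow> 'o \<Rightarrow> 'm \<Rightarrow> bool" where
  "right_minimal C Y Z g \<longleftrightarrow> g \<in> Hom C Y Z \<and>
     (\<forall>h\<in>Hom C Y Y. cmp C g h = g \<longrightarrow> is_iso C Y Y h)"

definition source_map :: "('o, 'm, 'k) kcat \<Rightarrow> ('o \<Rightarrow> 'o \<Rightarrow> 'm set) \<Rightarrow> 'o \<Rightarrow> 'o \<Rightarrow> 'm \<Rightarrow> bool" where
  "source_map C I X Y f \<longleftrightarrow> left_approx C I X Y f \<and> left_minimal C X Y f"

definition sink_map :: "('o, 'm, 'k) kcat \<Rightarrow> ('o \<Rightarrow> 'o \<Rightarrow> 'm set) \<Rightarrow> 'o \<Rightarrow> 'o \<Rightarrow> 'm \<Rightarrow> bool" where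
  "sink_map C I Y Z g \<longleftrightarrow> right_approx C I Y Z g \<and> right_minimal C Y Z g"

text \<open>The classes of fs form a basis of the quotient space V / N (both inside Hom(X,Y)).\<close>

definition quot_basis ::
  "('o, 'm, 'k::field) kcat \<Rightarrow> 'o \<Rightarrow> 'o \<Rightarrow> 'm set \<Rightarrow> 'm set \<Rightarrow> 'm list \<Rightarrow> bool" where
  "quot_basis C X Y V N fs \<longleftrightarrow> set fs \<subseteq> V \<and>
     (\<forall>cs. length cs = length fs \<longrightarrow> lincomb C X Y cs fs \<in> N \<longrightarrow> (\<forall>c\<in>set cs. c = 0)) \<and>
     (\<forall>h\<in>V. \<exists>cs. length cs = length fs \<and> msub C h (lincomb C X Y cs fs) \<in> N)"

text \<open>Irr^-_I(A,B) = I(A,B)/(J I)(A,B);  Irr^+_I(A,B) = I(A,B)/(I J)(A,B).\<close>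

definition irr_minus_basis ::
  "('o, 'm, 'k::field) kcat \<Rightarrow> ('o \<Rightarrow> 'o \<Rightarrow> 'm set) \<Rightarrow> 'o \<Rightarrow> 'o \<Rightarrow> 'm list \<Rightarrow> bool" where
  "irr_minus_basis C I A B fs \<longleftrightarrow> quot_basis C A B (I A B) (ideal_prod C (jac_rad C) I A B) fs"

definition irr_plus_basis ::
  "('o, 'm, 'k::field) kcat \<Rightarrow> ('o \<Rightarrow> 'o \<Rightarrow> 'm set) \<Rightarrow> 'o \<Rightarrow> 'o \<Rightarrow> 'm list \<Rightarrow> bool" where
  "irr_plus_basis C I A B fs \<longleftrightarrow> quot_basis C A B (I A B) (ideal_prod C I (jac_rad C) A B) fs"

definition irr_minus_nonzero ::
  "('o, 'm, 'k::field) kcat \<Rightarrow> ('o \<Rightarrow> 'o \<Rightarrow> 'm set) \<Rightarrow> 'o \<Rightarrow> 'o \<Rightarrow> bool" where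
  "irr_minus_nonzero C I A B \<longleftrightarrow> \<not> I A B \<subseteq> ideal_prod C (jac_rad C) I A B"

definition irr_plus_nonzero ::
  "('o, 'm, 'k::field) kcat \<Rightarrow> ('o \<Rightarrow> 'o \<Rightarrow> 'm set) \<Rightarrow> 'o \<Rightarrow> 'o \<Rightarrow> bool" where
  "irr_plus_nonzero C I A B \<longleftrightarrow> \<not> I A B \<subseteq> ideal_prod C I (jac_rad C) A B"

text \<open>Index list for the summands Y_i^{m_i}: pairs (i,j), i < n, j < m i.\<close>

definition bp_index :: "nat \<Rightarrow> (nat \<Rightarrow> nat) \<Rightarrow> (nat \<times> nat) list" where
  "bp_index n m = concat (map (\<lambda>i. map (\<lambda>j. (i, j)) [0..<m i]) [0..<n])"

end

theory Submission
  imports Defs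
begin


locale kc =
  fixes C :: "('o, 'm, 'k::field) kcat"
  assumes kl: "k_linear_cat C"
begin

lemmas ax1 = kl[unfolded k_linear_cat_def, THEN conjunct1]
lemmas ax2 = kl[unfolded k_linear_cat_def, THEN conjunct2, THEN conjunct1]
lemmas ax3 = kl[unfolded k_linear_cat_def, THEN conjunct2, THEN conjunct2, THEN conjunct1]
lemmas ax4 = kl[unfolded k_linear_cat_def, THEN conjunct2, THEN conjunct2, THEN conjunct2, THEN conjunct1]
lemmas ax5 = kl[unfolded k_linear_cat_def, THEN conjunct2, THEN conjunct2, THEN conjunct2, THEN conjunct2, THEN conjunct1]
lemmas ax6 = kl[unfolded k_linear_cat_def, THEN conjunct2, THEN conjunct2, THEN conjunct2, THEN conjunct2, THEN conjunct2, THEN conjunct1]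
lemmas ax7 = kl[unfolded k_linear_cat_def, THEN conjunct2, THEN conjunct2, THEN conjunct2, THEN conjunct2, THEN conjunct2, THEN conjunct2, THEN conjunct1]
lemmas ax8 = kl[unfolded k_linear_cat_def, THEN conjunct2, THEN conjunct2, THEN conjunct2, THEN conjunct2, THEN conjunct2, THEN conjunct2, THEN conjunct2, THEN conjunct1]
lemmas ax9 = kl[unfolded k_linear_cat_def, THEN conjunct2, THEN conjunct2, THEN conjunct2, THEN conjunct2, THEN conjunct2, THEN conjunct2, THEN conjunct2, THEN conjunct2]

definition arr :: "'m \<Rightarrow> bool" where "arr f \<longleftrightarrow> (\<exists>X Y. f \<in> Hom C X Y)"
definition dm :: "'m \<Rightarrow> 'o" where "dm f = (THE X. \<exists>Y. f \<in> Hom C X Y)"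
definition cd :: "'m \<Rightarrow> 'o" where "cd f = (THE Y. \<exists>X. f \<in> Hom C X Y)"

lemma hom_uniq: "f \<in> Hom C X Y \<Longrightarrow> f \<in> Hom C X' Y' \<Longrightarrow> X = X' \<and> Y = Y'"
  using ax2 by blast

lemma hom_iff: "f \<in> Hom C X Y \<longleftrightarrow> arr f \<and> dm f = X \<and> cd f = Y"
proof
  assume h: "f \<in> Hom C X Y"
  have "dm f = X" unfolding dm_def using h hom_uniq by (intro the_equality) blast+
  moreover have "cd f = Y" unfolding cd_def using h hom_uniq by (intro the_equality) blast+
  ultimately show "arr f \<and> dm f = X \<and> cd f = Y" using h arr_def by blast
next
  assume h: "arr f \<and> dm f = X \<and> cd f = Y"
  then obtain X0 Y0 where h0: "f \<in> Hom C X0 Y0" using arr_def by blast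
  have "dm f = X0" unfolding dm_def using h0 hom_uniq by (intro the_equality) blast+
  moreover have "cd f = Y0" unfolding cd_def using h0 hom_uniq by (intro the_equality) blast+
  ultimately show "f \<in> Hom C X Y" using h h0 by simp
qed

lemma homI: "arr f \<Longrightarrow> dm f = X \<Longrightarrow> cd f = Y \<Longrightarrow> f \<in> Hom C X Y" using hom_iff by blast
lemma homD: "f \<in> Hom C X Y \<Longrightarrow> arr f" "f \<in> Hom C X Y \<Longrightarrow> dm f = X" "f \<in> Hom C X Y \<Longrightarrow> cd f = Y"
  using hom_iff by blast+

lemma hom_obj: "f \<in> Hom C X Y \<Longrightarrow> X \<in> Obj C \<and> Y \<in> Obj C"
  using ax1 by blast
lemma arr_obj[simp]: "arr f \<Longrightarrow> dm f \<in> Obj C" "arr f \<Longrightarrow> cd f \<in> Obj C"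
  using hom_obj hom_iff by blast+

lemma id_hom: "X \<in> Obj C \<Longrightarrow> idt C X \<in> Hom C X X" using ax3 by blast
lemma cmp_hom: "f \<in> Hom C X Y \<Longrightarrow> g \<in> Hom C Y Z \<Longrightarrow> cmp C g f \<in> Hom C X Z"
  using ax4 by blast
lemma vsp:
  assumes "X \<in> Obj C" "Y \<in> Obj C"
  shows "mzero C X Y \<in> Hom C X Y"
   and "\<forall>f\<in>Hom C X Y. \<forall>g\<in>Hom C X Y. madd C f g \<in> Hom C X Y"
   and "\<forall>a f. f \<in> Hom C X Y \<longrightarrow> smul C a f \<in> Hom C X Y"
   and "\<forall>f\<in>Hom C X Y. \<forall>g\<in>Hom C X Y. \<forall>h\<in>Hom C X Y.
            madd C (madd C f g) h = madd C f (madd C g h)"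
   and "\<forall>f\<in>Hom C X Y. \<forall>g\<in>Hom C X Y. madd C f g = madd C g f"
   and "\<forall>f\<in>Hom C X Y. madd C (mzero C X Y) f = f"
   and "\<forall>f\<in>Hom C X Y. madd C f (mneg C f) = mzero C X Y"
   and "\<forall>a. \<forall>f\<in>Hom C X Y. \<forall>g\<in>Hom C X Y.
            smul C a (madd C f g) = madd C (smul C a f) (smul C a g)"
   and "\<forall>a b. \<forall>f\<in>Hom C X Y. smul C (a + b) f = madd C (smul C a f) (smul C b f)"
   and "\<forall>a b. \<forall>f\<in>Hom C X Y. smul C (a * b) f = smul C a (smul C b f)"
   and "\<forall>f\<in>Hom C X Y. smul C 1 f = f"
proof -
  note H = ax7[rule_format, OF assms]
  show "mzero C X Y \<in> Hom C X Y" by (rule H[THEN conjunct1])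
  show "\<forall>f\<in>Hom C X Y. \<forall>g\<in>Hom C X Y. madd C f g \<in> Hom C X Y" by (rule H[THEN conjunct2, THEN conjunct1])
  show "\<forall>a f. f \<in> Hom C X Y \<longrightarrow> smul C a f \<in> Hom C X Y" by (rule H[THEN conjunct2, THEN conjunct2, THEN conjunct1])
  show "\<forall>f\<in>Hom C X Y. \<forall>g\<in>Hom C X Y. \<forall>h\<in>Hom C X Y.
            madd C (madd C f g) h = madd C f (madd C g h)" by (rule H[THEN conjunct2, THEN conjunct2, THEN conjunct2, THEN conjunct1])
  show "\<forall>f\<in>Hom C X Y. \<forall>g\<in>Hom C X Y. madd C f g = madd C g f" by (rule H[THEN conjunct2, THEN conjunct2, THEN conjunct2, THEN conjunct2, THEN conjunct1])
  show "\<forall>f\<in>Hom C X Y. madd C (mzero C X Y) f = f" by (rule H[THEN conjunct2, THEN conjunct2, THEN conjunct2, THEN conjunct2, THEN conjunct2, THEN conjunct1])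
  show "\<forall>f\<in>Hom C X Y. madd C f (mneg C f) = mzero C X Y" by (rule H[THEN conjunct2, THEN conjunct2, THEN conjunct2, THEN conjunct2, THEN conjunct2, THEN conjunct2, THEN conjunct1])
  show "\<forall>a. \<forall>f\<in>Hom C X Y. \<forall>g\<in>Hom C X Y.
            smul C a (madd C f g) = madd C (smul C a f) (smul C a g)" by (rule H[THEN conjunct2, THEN conjunct2, THEN conjunct2, THEN conjunct2, THEN conjunct2, THEN conjunct2, THEN conjunct2, THEN conjunct1])
  show "\<forall>a b. \<forall>f\<in>Hom C X Y. smul C (a + b) f = madd C (smul C a f) (smul C b f)" by (rule H[THEN conjunct2, THEN conjunct2, THEN conjunct2, THEN conjunct2, THEN conjunct2, THEN conjunct2, THEN conjunct2, THEN conjunct2, THEN conjunct1])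
  show "\<forall>a b. \<forall>f\<in>Hom C X Y. smul C (a * b) f = smul C a (smul C b f)" by (rule H[THEN conjunct2, THEN conjunct2, THEN conjunct2, THEN conjunct2, THEN conjunct2, THEN conjunct2, THEN conjunct2, THEN conjunct2, THEN conjunct2, THEN conjunct1])
  show "\<forall>f\<in>Hom C X Y. smul C 1 f = f" by (rule H[THEN conjunct2, THEN conjunct2, THEN conjunct2, THEN conjunct2, THEN conjunct2, THEN conjunct2, THEN conjunct2, THEN conjunct2, THEN conjunct2, THEN conjunct2])
qed

lemma zero_hom: "X \<in> Obj C \<Longrightarrow> Y \<in> Obj C \<Longrightarrow> mzero C X Y \<in> Hom C X Y"
  using vsp(1) .
lemma add_hom: "f \<in> Hom C X Y \<Longrightarrow> g \<in> Hom C X Y \<Longrightarrow> madd C f g \<in> Hom C X Y"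
  using vsp(2) hom_obj by blast
lemma smul_hom: "f \<in> Hom C X Y \<Longrightarrow> smul C a f \<in> Hom C X Y"
  using vsp(3) hom_obj by blast

lemma arr_id[simp]: "X \<in> Obj C \<Longrightarrow> arr (idt C X)" "X \<in> Obj C \<Longrightarrow> dm (idt C X) = X" "X \<in> Obj C \<Longrightarrow> cd (idt C X) = X"
  using id_hom hom_iff by blast+
lemma arr_zero[simp]: "X \<in> Obj C \<Longrightarrow> Y \<in> Obj C \<Longrightarrow> arr (mzero C X Y)"
  "X \<in> Obj C \<Longrightarrow> Y \<in> Obj C \<Longrightarrow> dm (mzero C X Y) = X"
  "X \<in> Obj C \<Longrightarrow> Y \<in> Obj C \<Longrightarrow> cd (mzero C X Y) = Y"
  using zero_hom hom_iff by blast+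
lemma arr_hom: "arr f \<Longrightarrow> f \<in> Hom C (dm f) (cd f)" using homI by blast
lemma arr_cmp[simp]: "arr f \<Longrightarrow> arr g \<Longrightarrow> dm g = cd f \<Longrightarrow> arr (cmp C g f)"
  "arr f \<Longrightarrow> arr g \<Longrightarrow> dm g = cd f \<Longrightarrow> dm (cmp C g f) = dm f"
  "arr f \<Longrightarrow> arr g \<Longrightarrow> dm g = cd f \<Longrightarrow> cd (cmp C g f) = cd g"
proof -
  assume "arr f" "arr g" "dm g = cd f"
  hence "cmp C g f \<in> Hom C (dm f) (cd g)" using cmp_hom[OF arr_hom, of f g "cd g"] homI by simp
  thus "arr (cmp C g f)" "dm (cmp C g f) = dm f" "cd (cmp C g f) = cd g" using homD by blast+
qed
lemma arr_add[simp]: "arr f \<Longrightarrow> arr g \<Longrightarrow> dm g = dm f \<Longrightarrow> cd g = cd f \<Longrightarrow> arr (madd C f g)"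
  "arr f \<Longrightarrow> arr g \<Longrightarrow> dm g = dm f \<Longrightarrow> cd g = cd f \<Longrightarrow> dm (madd C f g) = dm f"
  "arr f \<Longrightarrow> arr g \<Longrightarrow> dm g = dm f \<Longrightarrow> cd g = cd f \<Longrightarrow> cd (madd C f g) = cd f"
proof -
  assume "arr f" "arr g" "dm g = dm f" "cd g = cd f"
  hence "madd C f g \<in> Hom C (dm f) (cd f)" using add_hom[OF arr_hom, of f g] homI by simp
  thus "arr (madd C f g)" "dm (madd C f g) = dm f" "cd (madd C f g) = cd f" using homD by blast+
qed
lemma arr_smul[simp]: "arr f \<Longrightarrow> arr (smul C a f)" "arr f \<Longrightarrow> dm (smul C a f) = dm f"
  "arr f \<Longrightarrow> cd (smul C a f) = cd f"
proof -
  assume "arr f"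
  hence "smul C a f \<in> Hom C (dm f) (cd f)" using smul_hom[OF arr_hom] by simp
  thus "arr (smul C a f)" "dm (smul C a f) = dm f" "cd (smul C a f) = cd f" using homD by blast+
qed
lemma arr_neg[simp]: "arr f \<Longrightarrow> arr (mneg C f)" "arr f \<Longrightarrow> dm (mneg C f) = dm f"
  "arr f \<Longrightarrow> cd (mneg C f) = cd f" unfolding mneg_def by simp_all
lemma arr_sub[simp]: "arr f \<Longrightarrow> arr g \<Longrightarrow> dm g = dm f \<Longrightarrow> cd g = cd f \<Longrightarrow> arr (msub C f g)"
  "arr f \<Longrightarrow> arr g \<Longrightarrow> dm g = dm f \<Longrightarrow> cd g = cd f \<Longrightarrow> dm (msub C f g) = dm f"
  "arr f \<Longrightarrow> arr g \<Longrightarrow> dm g = dm f \<Longrightarrow> cd g = cd f \<Longrightarrow> cd (msub C f g) = cd f"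
  unfolding msub_def by simp_all

lemma assoc: "arr f \<Longrightarrow> arr g \<Longrightarrow> arr h \<Longrightarrow> dm g = cd f \<Longrightarrow> dm h = cd g \<Longrightarrow>
  cmp C (cmp C h g) f = cmp C h (cmp C g f)"
proof -
  assume a: "arr f" "arr g" "arr h" "dm g = cd f" "dm h = cd g"
  have "f \<in> Hom C (dm f) (cd f)" "g \<in> Hom C (cd f) (cd g)" "h \<in> Hom C (cd g) (cd h)"
    using a homI by auto
  from ax5[rule_format, OF this] show ?thesis by simp
qed
lemma id_left[simp]: "arr f \<Longrightarrow> Y = cd f \<Longrightarrow> cmp C (idt C Y) f = f"
  using ax6[rule_format, OF arr_hom] by blast
lemma id_right[simp]: "arr f \<Longrightarrow> X = dm f \<Longrightarrow> cmp C f (idt C X) = f"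
  using ax6[rule_format, OF arr_hom] by blast

lemma add_assoc: "arr f \<Longrightarrow> arr g \<Longrightarrow> arr h \<Longrightarrow> dm g = dm f \<Longrightarrow> cd g = cd f \<Longrightarrow> dm h = dm f \<Longrightarrow> cd h = cd f \<Longrightarrow>
   madd C (madd C f g) h = madd C f (madd C g h)"
proof -
  assume a: "arr f" "arr g" "arr h" "dm g = dm f" "cd g = cd f" "dm h = dm f" "cd h = cd f"
  have "f \<in> Hom C (dm f) (cd f)" "g \<in> Hom C (dm f) (cd f)" "h \<in> Hom C (dm f) (cd f)"
    using a homI by auto
  from vsp(4)[OF arr_obj[OF a(1)], rule_format, OF this] show ?thesis .
qed
lemma add_comm: "arr f \<Longrightarrow> arr g \<Longrightarrow> dm g = dm f \<Longrightarrow> cd g = cd f \<Longrightarrow> madd C f g = madd C g f"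
proof -
  assume a: "arr f" "arr g" "dm g = dm f" "cd g = cd f"
  have "f \<in> Hom C (dm f) (cd f)" "g \<in> Hom C (dm f) (cd f)"
    using a homI by auto
  from vsp(5)[OF arr_obj[OF a(1)], rule_format, OF this] show ?thesis .
qed
lemma add_left_comm: "arr f \<Longrightarrow> arr g \<Longrightarrow> arr h \<Longrightarrow> dm g = dm f \<Longrightarrow> cd g = cd f \<Longrightarrow> dm h = dm f \<Longrightarrow> cd h = cd f \<Longrightarrow>
   madd C f (madd C g h) = madd C g (madd C f h)"
proof -
  assume a: "arr f" "arr g" "arr h" "dm g = dm f" "cd g = cd f" "dm h = dm f" "cd h = cd f"
  have "madd C f (madd C g h) = madd C (madd C f g) h" using a add_assoc[of f g h] by simp
  also have "\<dots> = madd C (madd C g f) h" using a add_comm[of f g] by simp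
  also have "\<dots> = madd C g (madd C f h)" using a add_assoc[of g f h] by simp
  finally show ?thesis .
qed
lemma zero_add[simp]: "arr f \<Longrightarrow> X = dm f \<Longrightarrow> Y = cd f \<Longrightarrow> madd C (mzero C X Y) f = f"
proof -
  assume a: "arr f" "X = dm f" "Y = cd f"
  from vsp(6)[OF arr_obj(1)[OF a(1)] arr_obj(2)[OF a(1)], rule_format, OF arr_hom[OF a(1)]] show ?thesis using a by simp
qed
lemma add_zero[simp]: "arr f \<Longrightarrow> X = dm f \<Longrightarrow> Y = cd f \<Longrightarrow> madd C f (mzero C X Y) = f"
  using add_comm[of f "mzero C X Y"] by simp
lemma add_neg: "arr f \<Longrightarrow> madd C f (mneg C f) = mzero C (dm f) (cd f)"
proof -
  assume a: "arr f"
  from vsp(7)[OF arr_obj(1)[OF a(1)] arr_obj(2)[OF a(1)], rule_format, OF arr_hom[OF a(1)]] show ?thesis by simp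
qed
lemma smul_add: "arr f \<Longrightarrow> arr g \<Longrightarrow> dm g = dm f \<Longrightarrow> cd g = cd f \<Longrightarrow>
   smul C a (madd C f g) = madd C (smul C a f) (smul C a g)"
proof -
  assume a: "arr f" "arr g" "dm g = dm f" "cd g = cd f"
  have "f \<in> Hom C (dm f) (cd f)" "g \<in> Hom C (dm f) (cd f)"
    using a homI by auto
  from vsp(8)[OF arr_obj[OF a(1)], rule_format, OF this] show ?thesis .
qed
lemma add_smul: "arr f \<Longrightarrow> smul C (a + b) f = madd C (smul C a f) (smul C b f)"
proof -
  assume a: "arr f"
  from vsp(9)[OF arr_obj(1)[OF a(1)] arr_obj(2)[OF a(1)], rule_format, OF arr_hom[OF a(1)]] show ?thesis by simp
qed
lemma smul_smul[simp]: "arr f \<Longrightarrow> smul C a (smul C b f) = smul C (a * b) f"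
proof -
  assume a: "arr f"
  from vsp(10)[OF arr_obj(1)[OF a(1)] arr_obj(2)[OF a(1)], rule_format, OF arr_hom[OF a(1)]] show ?thesis by simp
qed
lemma smul_one[simp]: "arr f \<Longrightarrow> smul C 1 f = f"
proof -
  assume a: "arr f"
  from vsp(11)[OF arr_obj(1)[OF a(1)] arr_obj(2)[OF a(1)], rule_format, OF arr_hom[OF a(1)]] show ?thesis by simp
qed

lemma dist: "arr f \<Longrightarrow> arr g \<Longrightarrow> arr g' \<Longrightarrow> dm g = cd f \<Longrightarrow> dm g' = cd f \<Longrightarrow> cd g' = cd g \<Longrightarrow>
        cmp C (madd C g g') f = madd C (cmp C g f) (cmp C g' f)"
proof -
  assume a: "arr f" "arr g" "arr g'" "dm g = cd f" "dm g' = cd f" "cd g' = cd g"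
  have "f \<in> Hom C (dm f) (cd f)" "g \<in> Hom C (cd f) (cd g)" "g' \<in> Hom C (cd f) (cd g)"
    using a homI by auto
  from ax8[rule_format, OF this] show ?thesis by blast
qed
lemma dist2: "arr f \<Longrightarrow> arr g \<Longrightarrow> arr f' \<Longrightarrow> dm g = cd f \<Longrightarrow> dm f' = dm f \<Longrightarrow> cd f' = cd f \<Longrightarrow>
        cmp C g (madd C f f') = madd C (cmp C g f) (cmp C g f')"
proof -
  assume a: "arr f" "arr g" "arr f'" "dm g = cd f" "dm f' = dm f" "cd f' = cd f"
  have "f \<in> Hom C (dm f) (cd f)" "f' \<in> Hom C (dm f) (cd f)" "g \<in> Hom C (cd f) (cd g)"
    using a homI by auto
  from ax9[rule_format, OF this] show ?thesis by blast
qed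
lemma cmp_smul_left[simp]: "arr f \<Longrightarrow> arr g \<Longrightarrow> dm g = cd f \<Longrightarrow> cmp C (smul C a g) f = smul C a (cmp C g f)"
proof -
  assume a: "arr f" "arr g" "dm g = cd f"
  have "f \<in> Hom C (dm f) (cd f)" "g \<in> Hom C (cd f) (cd g)"
    using a homI by auto
  from ax8[rule_format, OF this this(2)] show ?thesis by blast
qed
lemma cmp_smul_right[simp]: "arr f \<Longrightarrow> arr g \<Longrightarrow> dm g = cd f \<Longrightarrow> cmp C g (smul C a f) = smul C a (cmp C g f)"
proof -
  assume a: "arr f" "arr g" "dm g = cd f"
  have "f \<in> Hom C (dm f) (cd f)" "g \<in> Hom C (cd f) (cd g)"
    using a homI by auto
  from ax9[rule_format, OF this(1) this(1) this(2)] show ?thesis by blast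
qed

lemma add_cancel: "arr f \<Longrightarrow> arr g \<Longrightarrow> arr h \<Longrightarrow> dm g = dm f \<Longrightarrow> cd g = cd f \<Longrightarrow> dm h = dm f \<Longrightarrow> cd h = cd f \<Longrightarrow>
   madd C f g = madd C f h \<Longrightarrow> g = h"
proof -
  assume a: "arr f" "arr g" "arr h" "dm g = dm f" "cd g = cd f" "dm h = dm f" "cd h = cd f"
    and e: "madd C f g = madd C f h"
  have nf: "madd C (mneg C f) f = mzero C (dm f) (cd f)"
    using a add_comm[of f "mneg C f"] add_neg by simp
  have "g = madd C (madd C (mneg C f) f) g"
    using a nf by simp
  also have "\<dots> = madd C (mneg C f) (madd C f g)" using a by (simp add: add_assoc)
  also have "\<dots> = madd C (mneg C f) (madd C f h)" using e by simp
  also have "\<dots> = madd C (madd C (mneg C f) f) h" using a by (simp add: add_assoc)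
  also have "\<dots> = h" using a nf by simp
  finally show ?thesis .
qed

lemma smul_zero_scalar[simp]: "arr f \<Longrightarrow> smul C 0 f = mzero C (dm f) (cd f)"
proof -
  assume a: "arr f"
  have e: "madd C (smul C 0 f) (smul C 0 f) = madd C (smul C 0 f) (mzero C (dm f) (cd f))"
    using a add_smul[of f 0 0] by simp
  show ?thesis by (rule add_cancel[OF _ _ _ _ _ _ _ e]) (use a in auto)
qed

lemma cmp_zero_left[simp]: "arr f \<Longrightarrow> Z \<in> Obj C \<Longrightarrow> Y = cd f \<Longrightarrow> cmp C (mzero C Y Z) f = mzero C (dm f) Z"
proof -
  assume a: "arr f" "Z \<in> Obj C" "Y = cd f"
  have "cmp C (mzero C Y Z) f = cmp C (smul C 0 (mzero C Y Z)) f" using a by simp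
  also have "\<dots> = smul C 0 (cmp C (mzero C Y Z) f)" using a by (simp only: cmp_smul_left arr_zero arr_obj)
  also have "\<dots> = mzero C (dm f) Z" using a by simp
  finally show ?thesis .
qed
lemma cmp_zero_right[simp]: "arr g \<Longrightarrow> X \<in> Obj C \<Longrightarrow> Y = dm g \<Longrightarrow> cmp C g (mzero C X Y) = mzero C X (cd g)"
proof -
  assume a: "arr g" "X \<in> Obj C" "Y = dm g"
  have "cmp C g (mzero C X Y) = cmp C g (smul C 0 (mzero C X Y))" using a by simp
  also have "\<dots> = smul C 0 (cmp C g (mzero C X Y))" using a by (simp only: cmp_smul_right arr_zero arr_obj)
  also have "\<dots> = mzero C X (cd g)" using a by simp
  finally show ?thesis .
qed

lemma smul_zero_arr[simp]: "X \<in> Obj C \<Longrightarrow> Y \<in> Obj C \<Longrightarrow> smul C a (mzero C X Y) = mzero C X Y"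
proof -
  assume a: "X \<in> Obj C" "Y \<in> Obj C"
  have "smul C a (mzero C X Y) = smul C a (cmp C (mzero C X Y) (idt C X))" using a by simp
  also have "\<dots> = cmp C (mzero C X Y) (smul C a (idt C X))" using a by (simp del: cmp_zero_left)
  also have "\<dots> = mzero C X Y" using a by (simp del: cmp_smul_right)
  finally show ?thesis .
qed

end

context kc begin

lemma neg_add_cancel[simp]: "arr f \<Longrightarrow> madd C (mneg C f) f = mzero C (dm f) (cd f)"
  using add_comm[of f "mneg C f"] add_neg[of f] by simp
lemma sub_self[simp]: "arr f \<Longrightarrow> msub C f f = mzero C (dm f) (cd f)"
  unfolding msub_def using add_neg[of f] by simp

lemma add_assoc': "arr f \<Longrightarrow> arr g \<Longrightarrow> arr h \<Longrightarrow> dm g = dm f \<Longrightarrow> cd g = cd f \<Longrightarrow> dm h = dm f \<Longrightarrow> cd h = cd f \<Longrightarrow>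
   madd C f (madd C g h) = madd C (madd C f g) h"
  using add_assoc by simp

lemma sub_eq_iff: "arr x \<Longrightarrow> arr y \<Longrightarrow> arr d \<Longrightarrow> dm y = dm x \<Longrightarrow> cd y = cd x \<Longrightarrow> dm d = dm x \<Longrightarrow> cd d = cd x \<Longrightarrow>
  msub C x y = d \<longleftrightarrow> x = madd C y d"
proof
  assume a: "arr x" "arr y" "arr d" "dm y = dm x" "cd y = cd x" "dm d = dm x" "cd d = cd x"
  { assume e: "msub C x y = d"
    have "madd C y d = madd C y (madd C x (mneg C y))" using e by (simp add: msub_def)
    also have "\<dots> = madd C x (madd C y (mneg C y))" using a by (simp add: add_left_comm)
    also have "\<dots> = x" using a by (simp add: add_neg)
    finally show "x = madd C y d" by simp }
  { assume e: "x = madd C y d"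
    have "msub C x y = madd C (madd C y d) (mneg C y)" using e by (simp add: msub_def)
    also have "\<dots> = madd C d (madd C y (mneg C y))" using a by (simp add: add_left_comm add_comm[of y d] add_assoc)
    also have "\<dots> = d" using a by (simp add: add_neg)
    finally show "msub C x y = d" . }
qed

lemma neg_smul: "mneg C f = smul C (-1) f" by (simp add: mneg_def)

lemma cmp_neg_left[simp]: "arr f \<Longrightarrow> arr g \<Longrightarrow> dm g = cd f \<Longrightarrow> cmp C (mneg C g) f = mneg C (cmp C g f)"
  by (simp add: mneg_def)
lemma cmp_neg_right[simp]: "arr f \<Longrightarrow> arr g \<Longrightarrow> dm g = cd f \<Longrightarrow> cmp C g (mneg C f) = mneg C (cmp C g f)"
  by (simp add: mneg_def)
lemma cmp_sub_left: "arr f \<Longrightarrow> arr g \<Longrightarrow> arr g' \<Longrightarrow> dm g = cd f \<Longrightarrow> dm g' = cd f \<Longrightarrow> cd g' = cd g \<Longrightarrow>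
        cmp C (msub C g g') f = msub C (cmp C g f) (cmp C g' f)"
  unfolding msub_def by (simp add: dist)
lemma cmp_sub_right: "arr f \<Longrightarrow> arr g \<Longrightarrow> arr f' \<Longrightarrow> dm g = cd f \<Longrightarrow> dm f' = dm f \<Longrightarrow> cd f' = cd f \<Longrightarrow>
        cmp C g (msub C f f') = msub C (cmp C g f) (cmp C g f')"
  unfolding msub_def by (simp add: dist2)

lemma neg_neg[simp]: "arr f \<Longrightarrow> mneg C (mneg C f) = f" by (simp add: mneg_def)
lemma smul_neg: "arr f \<Longrightarrow> smul C a (mneg C f) = mneg C (smul C a f)" by (simp add: mneg_def mult.commute)
lemma neg_add: "arr f \<Longrightarrow> arr g \<Longrightarrow> dm g = dm f \<Longrightarrow> cd g = cd f \<Longrightarrow>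
   mneg C (madd C f g) = madd C (mneg C f) (mneg C g)"
  by (simp add: mneg_def smul_add)
lemma neg_zero[simp]: "X \<in> Obj C \<Longrightarrow> Y \<in> Obj C \<Longrightarrow> mneg C (mzero C X Y) = mzero C X Y"
  by (simp add: mneg_def)
lemma sub_zero[simp]: "arr f \<Longrightarrow> X = dm f \<Longrightarrow> Y = cd f \<Longrightarrow> msub C f (mzero C X Y) = f"
  by (simp add: msub_def mneg_def)

section \<open>Finite sums\<close>

definition S :: "'o \<Rightarrow> 'o \<Rightarrow> 'a list \<Rightarrow> ('a \<Rightarrow> 'm) \<Rightarrow> 'm" where
  "S X Y xs F = lsum C X Y (map F xs)"

lemma S_Nil[simp]: "S X Y [] F = mzero C X Y" by (simp add: S_def lsum_def)
lemma S_Cons[simp]: "S X Y (x # xs) F = madd C (F x) (S X Y xs F)" by (simp add: S_def lsum_def)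

lemma S_hom: "X \<in> Obj C \<Longrightarrow> Y \<in> Obj C \<Longrightarrow> (\<And>x. x \<in> set xs \<Longrightarrow> F x \<in> Hom C X Y) \<Longrightarrow> S X Y xs F \<in> Hom C X Y"
  by (induction xs) (auto simp: zero_hom add_hom)

lemma S_arr[simp]: "X \<in> Obj C \<Longrightarrow> Y \<in> Obj C \<Longrightarrow> (\<And>x. x \<in> set xs \<Longrightarrow> arr (F x) \<and> dm (F x) = X \<and> cd (F x) = Y) \<Longrightarrow>
   arr (S X Y xs F) \<and> dm (S X Y xs F) = X \<and> cd (S X Y xs F) = Y"
  using S_hom[of X Y xs F] hom_iff by metis

lemma S_cong: "(\<And>x. x \<in> set xs \<Longrightarrow> F x = G x) \<Longrightarrow> S X Y xs F = S X Y xs G"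
  by (simp add: S_def cong: map_cong)

lemma S_append: "X \<in> Obj C \<Longrightarrow> Y \<in> Obj C \<Longrightarrow> (\<And>x. x \<in> set (xs @ ys) \<Longrightarrow> F x \<in> Hom C X Y) \<Longrightarrow>
   S X Y (xs @ ys) F = madd C (S X Y xs F) (S X Y ys F)"
proof (induction xs)
  case Nil
  then show ?case using S_hom[of X Y ys F] hom_iff by simp
next
  case (Cons x xs)
  have h1: "F x \<in> Hom C X Y" using Cons by simp
  have h2: "S X Y xs F \<in> Hom C X Y" "S X Y ys F \<in> Hom C X Y" using Cons by (auto intro: S_hom)
  show ?case using Cons h1 h2 by (simp add: add_assoc hom_iff)
qed

lemma S_zero: "X \<in> Obj C \<Longrightarrow> Y \<in> Obj C \<Longrightarrow> (\<And>x. x \<in> set xs \<Longrightarrow> F x = mzero C X Y) \<Longrightarrow> S X Y xs F = mzero C X Y"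
  by (induction xs) auto

lemma S_add: "X \<in> Obj C \<Longrightarrow> Y \<in> Obj C \<Longrightarrow> (\<And>x. x \<in> set xs \<Longrightarrow> F x \<in> Hom C X Y) \<Longrightarrow> (\<And>x. x \<in> set xs \<Longrightarrow> G x \<in> Hom C X Y) \<Longrightarrow>
   S X Y xs (\<lambda>x. madd C (F x) (G x)) = madd C (S X Y xs F) (S X Y xs G)"
proof (induction xs)
  case Nil
  then show ?case by simp
next
  case (Cons x xs)
  have h: "F x \<in> Hom C X Y" "G x \<in> Hom C X Y" "S X Y xs F \<in> Hom C X Y" "S X Y xs G \<in> Hom C X Y"
    using Cons by (auto intro: S_hom)
  have "S X Y (x # xs) (\<lambda>x. madd C (F x) (G x)) = madd C (madd C (F x) (G x)) (madd C (S X Y xs F) (S X Y xs G))"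
    using Cons by simp
  also have "\<dots> = madd C (madd C (F x) (S X Y xs F)) (madd C (G x) (S X Y xs G))"
    using h by (simp add: hom_iff add_assoc add_left_comm)
  finally show ?case by simp
qed

lemma S_smul: "X \<in> Obj C \<Longrightarrow> Y \<in> Obj C \<Longrightarrow> (\<And>x. x \<in> set xs \<Longrightarrow> F x \<in> Hom C X Y) \<Longrightarrow>
   smul C c (S X Y xs F) = S X Y xs (\<lambda>x. smul C c (F x))"
proof (induction xs)
  case Nil
  then show ?case by simp
next
  case (Cons x xs)
  have h: "F x \<in> Hom C X Y" "S X Y xs F \<in> Hom C X Y"
    using Cons by (auto intro: S_hom)
  show ?case using Cons h by (simp add: hom_iff smul_add)
qed

lemma cmp_S_left: "f \<in> Hom C W X \<Longrightarrow> Y \<in> Obj C \<Longrightarrow> (\<And>x. x \<in> set xs \<Longrightarrow> F x \<in> Hom C X Y) \<Longrightarrow>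
   cmp C (S X Y xs F) f = S W Y xs (\<lambda>x. cmp C (F x) f)"
proof (induction xs)
  case Nil
  then show ?case by (simp add: hom_iff)
next
  case (Cons x xs)
  have h: "F x \<in> Hom C X Y" "S X Y xs F \<in> Hom C X Y"
    using Cons hom_obj by (auto intro: S_hom)
  show ?case using Cons h by (simp add: hom_iff dist)
qed

lemma cmp_S_right: "g \<in> Hom C Y Z \<Longrightarrow> X \<in> Obj C \<Longrightarrow> (\<And>x. x \<in> set xs \<Longrightarrow> F x \<in> Hom C X Y) \<Longrightarrow>
   cmp C g (S X Y xs F) = S X Z xs (\<lambda>x. cmp C g (F x))"
proof (induction xs)
  case Nil
  then show ?case by (simp add: hom_iff)
next
  case (Cons x xs)
  have h: "F x \<in> Hom C X Y" "S X Y xs F \<in> Hom C X Y"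
    using Cons hom_obj by (auto intro: S_hom)
  show ?case using Cons h by (simp add: hom_iff dist2)
qed

lemma S_single: "X \<in> Obj C \<Longrightarrow> Y \<in> Obj C \<Longrightarrow> distinct xs \<Longrightarrow> x0 \<in> set xs \<Longrightarrow> (\<And>x. x \<in> set xs \<Longrightarrow> F x \<in> Hom C X Y) \<Longrightarrow>
   (\<And>x. x \<in> set xs \<Longrightarrow> x \<noteq> x0 \<Longrightarrow> F x = mzero C X Y) \<Longrightarrow> S X Y xs F = F x0"
proof (induction xs)
  case Nil
  then show ?case by simp
next
  case (Cons x xs)
  show ?case
  proof (cases "x = x0")
    case True
    hence "S X Y xs F = mzero C X Y" using Cons by (intro S_zero) auto
    then show ?thesis using True Cons by (simp add: hom_iff)
  next
    case False
    hence "S X Y xs F = F x0" using Cons by simp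
    then show ?thesis using False Cons by (simp add: hom_iff)
  qed
qed

lemma S_concat: "X \<in> Obj C \<Longrightarrow> Y \<in> Obj C \<Longrightarrow> (\<And>x. x \<in> set (concat (map G ys)) \<Longrightarrow> F x \<in> Hom C X Y) \<Longrightarrow>
  S X Y (concat (map G ys)) F = S X Y ys (\<lambda>y. S X Y (G y) F)"
proof (induction ys)
  case Nil
  then show ?case by simp
next
  case (Cons y ys)
  have "S X Y (concat (map G ys)) F = S X Y ys (\<lambda>y. S X Y (G y) F)"
    using Cons.prems by (intro Cons.IH) auto
  moreover have "S X Y (G y @ concat (map G ys)) F = madd C (S X Y (G y) F) (S X Y (concat (map G ys)) F)"
    using Cons.prems by (intro S_append) auto
  ultimately show ?case by simp
qed

lemma S_map: "S X Y (map h xs) F = S X Y xs (\<lambda>x. F (h x))"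
  by (simp add: S_def comp_def)

lemma S_swap: "X \<in> Obj C \<Longrightarrow> Y \<in> Obj C \<Longrightarrow> (\<And>x y. x \<in> set xs \<Longrightarrow> y \<in> set ys \<Longrightarrow> F x y \<in> Hom C X Y) \<Longrightarrow>
  S X Y xs (\<lambda>x. S X Y ys (\<lambda>y. F x y)) = S X Y ys (\<lambda>y. S X Y xs (\<lambda>x. F x y))"
proof (induction xs)
  case Nil
  then show ?case by (simp add: S_zero)
next
  case (Cons x xs)
  have "S X Y (x # xs) (\<lambda>x. S X Y ys (F x)) = madd C (S X Y ys (F x)) (S X Y ys (\<lambda>y. S X Y xs (\<lambda>x. F x y)))"
    using Cons by simp
  also have "\<dots> = S X Y ys (\<lambda>y. madd C (F x y) (S X Y xs (\<lambda>x. F x y)))"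
    using Cons by (intro S_add[symmetric]) (auto intro!: S_hom)
  finally show ?case by simp
qed

lemma lincomb_S: "length cs = length fs \<Longrightarrow>
   lincomb C X Y cs fs = S X Y [0..<length fs] (\<lambda>j. smul C (cs ! j) (fs ! j))"
proof -
  assume l: "length cs = length fs"
  have "map (\<lambda>(c, f). smul C c f) (zip cs fs) = map (\<lambda>j. smul C (cs ! j) (fs ! j)) [0..<length fs]"
    using l by (intro nth_equalityI) auto
  thus ?thesis by (simp add: lincomb_def S_def)
qed

end

context kc begin

lemma iso_hom: "is_iso C X Y f \<Longrightarrow> f \<in> Hom C X Y" by (simp add: is_iso_def)

lemma iso_id: "X \<in> Obj C \<Longrightarrow> is_iso C X X (idt C X)"
  unfolding is_iso_def by (rule conjI, simp add: id_hom, rule bexI[of _ "idt C X"]) (auto simp: id_hom)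

lemma iso_intro: "f \<in> Hom C X Y \<Longrightarrow> g \<in> Hom C Y X \<Longrightarrow> h \<in> Hom C Y X \<Longrightarrow>
   cmp C g f = idt C X \<Longrightarrow> cmp C f h = idt C Y \<Longrightarrow> is_iso C X Y f"
proof -
  assume a: "f \<in> Hom C X Y" "g \<in> Hom C Y X" "h \<in> Hom C Y X" "cmp C g f = idt C X" "cmp C f h = idt C Y"
  have "g = cmp C g (cmp C f h)" using a by (simp add: hom_iff)
  also have "\<dots> = cmp C (cmp C g f) h" using a(1-3) by (simp add: hom_iff assoc)
  also have "\<dots> = h" using a by (simp add: hom_iff)
  finally have "g = h" .
  thus ?thesis using a unfolding is_iso_def by blast
qed

lemma iso_cmp: "is_iso C X Y a \<Longrightarrow> is_iso C Y Z b \<Longrightarrow> is_iso C X Z (cmp C b a)"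
proof -
  assume a: "is_iso C X Y a" "is_iso C Y Z b"
  obtain a' where a': "a' \<in> Hom C Y X" "cmp C a' a = idt C X" "cmp C a a' = idt C Y" using a is_iso_def by metis
  obtain b' where b': "b' \<in> Hom C Z Y" "cmp C b' b = idt C Y" "cmp C b b' = idt C Z" using a is_iso_def by metis
  have h: "a \<in> Hom C X Y" "b \<in> Hom C Y Z" using a iso_hom by auto
  have "cmp C (cmp C a' b') (cmp C b a) = cmp C a' (cmp C (cmp C b' b) a)"
    using a'(1) b'(1) h by (simp add: hom_iff assoc)
  also have "\<dots> = idt C X" using a' b' h by (simp add: hom_iff)
  finally have 1: "cmp C (cmp C a' b') (cmp C b a) = idt C X" .
  have "cmp C (cmp C b a) (cmp C a' b') = cmp C b (cmp C (cmp C a a') b')"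
    using a'(1) b'(1) h by (simp add: hom_iff assoc)
  also have "\<dots> = idt C Z" using a' b' h by (simp add: hom_iff)
  finally have 2: "cmp C (cmp C b a) (cmp C a' b') = idt C Z" .
  show ?thesis using 1 2 a' b' h
    by (intro iso_intro[of _ _ _ "cmp C a' b'" "cmp C a' b'"]) (auto intro: cmp_hom)
qed

lemma iso_inv: "is_iso C X Y f \<Longrightarrow> \<exists>g. g \<in> Hom C Y X \<and> cmp C g f = idt C X \<and> cmp C f g = idt C Y \<and> is_iso C Y X g"
proof -
  assume a: "is_iso C X Y f"
  then obtain g where g: "g \<in> Hom C Y X" "cmp C g f = idt C X" "cmp C f g = idt C Y" using is_iso_def by metis
  have "is_iso C Y X g" using g a iso_hom by (intro iso_intro[of _ _ _ f f]) auto
  thus ?thesis using g by blast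
qed

lemma iso_cancel_left: "is_iso C Y Z b \<Longrightarrow> f \<in> Hom C X Y \<Longrightarrow> f' \<in> Hom C X Y \<Longrightarrow> cmp C b f = cmp C b f' \<Longrightarrow> f = f'"
proof -
  assume a: "is_iso C Y Z b" "f \<in> Hom C X Y" "f' \<in> Hom C X Y" "cmp C b f = cmp C b f'"
  obtain b' where b': "b' \<in> Hom C Z Y" "cmp C b' b = idt C Y" using a is_iso_def by metis
  have h: "b \<in> Hom C Y Z" using a iso_hom by auto
  have "f = cmp C (cmp C b' b) f" using a b' by (simp add: hom_iff)
  also have "\<dots> = cmp C b' (cmp C b f)" using a(2) b'(1) h by (simp add: hom_iff assoc)
  also have "\<dots> = cmp C b' (cmp C b f')" using a by simp
  also have "\<dots> = cmp C (cmp C b' b) f'" using a(3) b'(1) h by (simp add: hom_iff assoc)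
  also have "\<dots> = f'" using a b' by (simp add: hom_iff)
  finally show ?thesis .
qed

lemma iso_cancel_right: "is_iso C X Y a \<Longrightarrow> f \<in> Hom C Y Z \<Longrightarrow> f' \<in> Hom C Y Z \<Longrightarrow> cmp C f a = cmp C f' a \<Longrightarrow> f = f'"
proof -
  assume a: "is_iso C X Y a" "f \<in> Hom C Y Z" "f' \<in> Hom C Y Z" "cmp C f a = cmp C f' a"
  obtain a' where a': "a' \<in> Hom C Y X" "cmp C a a' = idt C Y" using a is_iso_def by metis
  have h: "a \<in> Hom C X Y" using a iso_hom by auto
  have "f = cmp C f (cmp C a a')" using a a' by (simp add: hom_iff)
  also have "\<dots> = cmp C (cmp C f a) a'" using a(2) a'(1) h by (simp add: hom_iff assoc)
  also have "\<dots> = cmp C (cmp C f' a) a'" using a by simp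
  also have "\<dots> = cmp C f' (cmp C a a')" using a(3) a'(1) h by (simp add: hom_iff assoc)
  also have "\<dots> = f'" using a a' by (simp add: hom_iff)
  finally show ?thesis .
qed

section \<open>Jacobson radical\<close>

lemma jac_iff: "f \<in> jac_rad C X Y \<longleftrightarrow> f \<in> Hom C X Y \<and> (\<forall>g\<in>Hom C Y X. is_iso C X X (msub C (idt C X) (cmp C g f)))"
  by (simp add: jac_rad_def)

lemma jac_hom: "f \<in> jac_rad C X Y \<Longrightarrow> f \<in> Hom C X Y" by (simp add: jac_iff)

lemma ab_lemma:
  assumes a: "a \<in> Hom C X Y" and b: "b \<in> Hom C Y X"
    and u: "is_iso C X X (msub C (idt C X) (cmp C b a))"
  shows "is_iso C Y Y (msub C (idt C Y) (cmp C a b))"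
proof -
  obtain v where v: "v \<in> Hom C X X" "cmp C v (msub C (idt C X) (cmp C b a)) = idt C X"
     "cmp C (msub C (idt C X) (cmp C b a)) v = idt C X"
    using u is_iso_def by metis
  have X: "X \<in> Obj C" and Y: "Y \<in> Obj C" using a hom_obj by auto
  note hs = a b v(1) id_hom[OF X] id_hom[OF Y]
  have "msub C v (cmp C (cmp C b a) v) = idt C X"
    using v(3) hs by (simp add: hom_iff cmp_sub_left)
  hence v1: "v = madd C (cmp C (cmp C b a) v) (idt C X)"
    using hs by (subst (asm) sub_eq_iff) (auto simp: hom_iff)
  have "msub C v (cmp C v (cmp C b a)) = idt C X"
    using v(2) hs by (simp add: hom_iff cmp_sub_right)
  hence v2: "v = madd C (cmp C v (cmp C b a)) (idt C X)"
    using hs by (subst (asm) sub_eq_iff) (auto simp: hom_iff)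
  define w where "w = madd C (idt C Y) (cmp C a (cmp C v b))"
  have avb: "cmp C a (cmp C v b) \<in> Hom C Y Y" using hs by (auto intro!: cmp_hom)
  have w: "w \<in> Hom C Y Y" unfolding w_def using hs avb by (auto intro!: add_hom)
  have e1: "cmp C a (cmp C v b) = madd C (cmp C (cmp C a b) (cmp C a (cmp C v b))) (cmp C a b)"
  proof -
    have "cmp C a (cmp C v b) = cmp C a (cmp C (madd C (cmp C (cmp C b a) v) (idt C X)) b)"
      using v1 by simp
    also have "\<dots> = madd C (cmp C (cmp C a b) (cmp C a (cmp C v b))) (cmp C a b)"
      using hs by (simp add: hom_iff dist dist2 assoc)
    finally show ?thesis .
  qed
  have e2: "cmp C a (cmp C v b) = madd C (cmp C (cmp C a (cmp C v b)) (cmp C a b)) (cmp C a b)"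
  proof -
    have "cmp C a (cmp C v b) = cmp C a (cmp C (madd C (cmp C v (cmp C b a)) (idt C X)) b)"
      using v2 by simp
    also have "\<dots> = madd C (cmp C (cmp C a (cmp C v b)) (cmp C a b)) (cmp C a b)"
      using hs by (simp add: hom_iff dist dist2 assoc)
    finally show ?thesis .
  qed
  have ab: "cmp C a b \<in> Hom C Y Y" using hs by (auto intro: cmp_hom)
  have l: "cmp C w (msub C (idt C Y) (cmp C a b)) = idt C Y"
  proof -
    have "cmp C w (msub C (idt C Y) (cmp C a b)) = msub C w (cmp C w (cmp C a b))"
      using w ab hs by (simp add: hom_iff cmp_sub_right)
    also have "cmp C w (cmp C a b) = madd C (cmp C a b) (cmp C (cmp C a (cmp C v b)) (cmp C a b))"
      unfolding w_def using ab avb hs by (simp add: hom_iff dist)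
    finally have "cmp C w (msub C (idt C Y) (cmp C a b)) = msub C w (madd C (cmp C a b) (cmp C (cmp C a (cmp C v b)) (cmp C a b)))" .
    also have "madd C (cmp C a b) (cmp C (cmp C a (cmp C v b)) (cmp C a b)) = cmp C a (cmp C v b)"
      using e2 ab avb hs by (simp add: hom_iff add_comm)
    also have "msub C w (cmp C a (cmp C v b)) = idt C Y"
      using ab avb hs by (subst sub_eq_iff) (auto simp: hom_iff w_def add_comm)
    finally show ?thesis .
  qed
  have r: "cmp C (msub C (idt C Y) (cmp C a b)) w = idt C Y"
  proof -
    have "cmp C (msub C (idt C Y) (cmp C a b)) w = msub C w (cmp C (cmp C a b) w)"
      using w ab hs by (simp add: hom_iff cmp_sub_left)
    also have "cmp C (cmp C a b) w = madd C (cmp C a b) (cmp C (cmp C a b) (cmp C a (cmp C v b)))"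
      unfolding w_def using ab avb hs by (simp add: hom_iff dist2)
    finally have "cmp C (msub C (idt C Y) (cmp C a b)) w = msub C w (madd C (cmp C a b) (cmp C (cmp C a b) (cmp C a (cmp C v b))))" .
    also have "madd C (cmp C a b) (cmp C (cmp C a b) (cmp C a (cmp C v b))) = cmp C a (cmp C v b)"
      using e1 ab avb hs by (simp add: hom_iff add_comm)
    also have "msub C w (cmp C a (cmp C v b)) = idt C Y"
      using ab avb hs by (subst sub_eq_iff) (auto simp: hom_iff w_def add_comm)
    finally show ?thesis .
  qed
  show ?thesis using l r w ab hs by (intro iso_intro[of _ _ _ w w]) (auto intro: add_hom simp: msub_def neg_smul smul_hom)
qed

end

context kc begin

lemma sub_sub: "arr x \<Longrightarrow> arr a \<Longrightarrow> arr b \<Longrightarrow> dm a = dm x \<Longrightarrow> cd a = cd x \<Longrightarrow> dm b = dm x \<Longrightarrow> cd b = cd x \<Longrightarrow>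
  msub C (msub C x a) b = msub C x (madd C a b)"
proof -
  assume h: "arr x" "arr a" "arr b" "dm a = dm x" "cd a = cd x" "dm b = dm x" "cd b = cd x"
  have "msub C (msub C x a) b = madd C (madd C x (mneg C a)) (mneg C b)" by (simp add: msub_def)
  also have "\<dots> = madd C x (madd C (mneg C a) (mneg C b))" using h by (intro add_assoc) auto
  also have "madd C (mneg C a) (mneg C b) = mneg C (madd C a b)" using h by (intro neg_add[symmetric]) auto
  finally show ?thesis by (simp add: msub_def)
qed

lemma add_sub_cancel: "arr e \<Longrightarrow> arr x \<Longrightarrow> dm e = dm x \<Longrightarrow> cd e = cd x \<Longrightarrow> madd C e (msub C x e) = x"
proof -
  assume a: "arr e" "arr x" "dm e = dm x" "cd e = cd x"
  have "madd C e (msub C x e) = madd C x (madd C e (mneg C e))"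
    unfolding msub_def using a add_left_comm[of e x "mneg C e"] by simp
  also have "\<dots> = x" using a by (simp add: add_neg)
  finally show ?thesis .
qed

lemma jac_zero: "X \<in> Obj C \<Longrightarrow> Y \<in> Obj C \<Longrightarrow> mzero C X Y \<in> jac_rad C X Y"
  unfolding jac_iff using zero_hom iso_id by (auto simp: hom_iff)

lemma jac_left: "f \<in> jac_rad C X Y \<Longrightarrow> h \<in> Hom C Y Z \<Longrightarrow> cmp C h f \<in> jac_rad C X Z"
proof -
  assume a: "f \<in> jac_rad C X Y" "h \<in> Hom C Y Z"
  have f: "f \<in> Hom C X Y" using a jac_hom by auto
  show ?thesis unfolding jac_iff
  proof (intro conjI ballI)
    show "cmp C h f \<in> Hom C X Z" using f a(2) by (rule cmp_hom)
    fix g assume g: "g \<in> Hom C Z X"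
    have "cmp C g (cmp C h f) = cmp C (cmp C g h) f" using f g a by (simp add: hom_iff assoc)
    moreover have "cmp C g h \<in> Hom C Y X" using g a cmp_hom by blast
    ultimately show "is_iso C X X (msub C (idt C X) (cmp C g (cmp C h f)))" using a jac_iff by simp
  qed
qed

lemma jac_right: "f \<in> jac_rad C X Y \<Longrightarrow> k \<in> Hom C W X \<Longrightarrow> cmp C f k \<in> jac_rad C W Y"
proof -
  assume a: "f \<in> jac_rad C X Y" "k \<in> Hom C W X"
  have f: "f \<in> Hom C X Y" using a jac_hom by auto
  show ?thesis unfolding jac_iff
  proof (intro conjI ballI)
    show "cmp C f k \<in> Hom C W Y" using f a cmp_hom by blast
    fix g assume g: "g \<in> Hom C Y W"
    have kg: "cmp C k g \<in> Hom C Y X" using g a cmp_hom by blast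
    have "is_iso C X X (msub C (idt C X) (cmp C (cmp C k g) f))" using a kg jac_iff by blast
    moreover have "cmp C (cmp C k g) f = cmp C k (cmp C g f)" using f g a by (simp add: hom_iff assoc)
    ultimately have "is_iso C X X (msub C (idt C X) (cmp C k (cmp C g f)))" by simp
    moreover have "cmp C g f \<in> Hom C X W" using f g cmp_hom by blast
    ultimately have "is_iso C W W (msub C (idt C W) (cmp C (cmp C g f) k))"
      using ab_lemma[of "cmp C g f" X W k] a by blast
    moreover have "cmp C (cmp C g f) k = cmp C g (cmp C f k)" using f g a by (simp add: hom_iff assoc)
    ultimately show "is_iso C W W (msub C (idt C W) (cmp C g (cmp C f k)))" by simp
  qed
qed

lemma jac_add: "f1 \<in> jac_rad C X Y \<Longrightarrow> f2 \<in> jac_rad C X Y \<Longrightarrow> madd C f1 f2 \<in> jac_rad C X Y"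
proof -
  assume a: "f1 \<in> jac_rad C X Y" "f2 \<in> jac_rad C X Y"
  have f: "f1 \<in> Hom C X Y" "f2 \<in> Hom C X Y" using a jac_hom by auto
  have X: "X \<in> Obj C" using f hom_obj by blast
  show ?thesis unfolding jac_iff
  proof (intro conjI ballI)
    show "madd C f1 f2 \<in> Hom C X Y" using f add_hom by blast
    fix g assume g: "g \<in> Hom C Y X"
    define u where "u = msub C (idt C X) (cmp C g f1)"
    have u: "is_iso C X X u" unfolding u_def using a(1) g jac_iff by blast
    then obtain u' where u': "u' \<in> Hom C X X" "cmp C u u' = idt C X" using is_iso_def by metis
    have uh: "u \<in> Hom C X X" using u iso_hom by blast
    have ug: "cmp C u' g \<in> Hom C Y X" using u' g cmp_hom by blast
    have i2: "is_iso C X X (msub C (idt C X) (cmp C (cmp C u' g) f2))" using a ug jac_iff by blast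
    have e1: "cmp C u (msub C (idt C X) (cmp C (cmp C u' g) f2)) = msub C u (cmp C u (cmp C (cmp C u' g) f2))"
      using uh ug f X by (simp add: hom_iff cmp_sub_right)
    have e2: "cmp C u (cmp C (cmp C u' g) f2) = cmp C (cmp C u u') (cmp C g f2)"
      using uh u'(1) g f by (simp add: hom_iff assoc)
    have e3: "cmp C (cmp C u u') (cmp C g f2) = cmp C g f2" using u' g f by (simp add: hom_iff)
    have e4: "msub C u (cmp C g f2) = msub C (idt C X) (madd C (cmp C g f1) (cmp C g f2))"
      unfolding u_def using g f X by (intro sub_sub) (auto simp: hom_iff)
    have e5: "madd C (cmp C g f1) (cmp C g f2) = cmp C g (madd C f1 f2)"
      using g f by (intro dist2[symmetric]) (auto simp: hom_iff)
    have "cmp C u (msub C (idt C X) (cmp C (cmp C u' g) f2)) = msub C (idt C X) (cmp C g (madd C f1 f2))"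
      unfolding e1 e2 e3 e4 e5 ..
    moreover have "is_iso C X X (cmp C u (msub C (idt C X) (cmp C (cmp C u' g) f2)))"
      using iso_cmp[OF i2 u] .
    ultimately show "is_iso C X X (msub C (idt C X) (cmp C g (madd C f1 f2)))" by simp
  qed
qed

lemma jac_smul: "f \<in> jac_rad C X Y \<Longrightarrow> smul C c f \<in> jac_rad C X Y"
proof -
  assume a: "f \<in> jac_rad C X Y"
  have f: "f \<in> Hom C X Y" using a jac_hom by auto
  have Y: "Y \<in> Obj C" using f hom_obj by blast
  have "cmp C (smul C c (idt C Y)) f \<in> jac_rad C X Y" using a Y by (intro jac_left) (auto intro: smul_hom id_hom)
  thus ?thesis using f Y by (simp add: hom_iff)
qed

lemma jac_neg: "f \<in> jac_rad C X Y \<Longrightarrow> mneg C f \<in> jac_rad C X Y"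
  unfolding mneg_def by (rule jac_smul)

lemma jac_sub: "f1 \<in> jac_rad C X Y \<Longrightarrow> f2 \<in> jac_rad C X Y \<Longrightarrow> msub C f1 f2 \<in> jac_rad C X Y"
  unfolding msub_def by (intro jac_add jac_neg)

lemma jac_S: "X \<in> Obj C \<Longrightarrow> Y \<in> Obj C \<Longrightarrow> (\<And>x. x \<in> set xs \<Longrightarrow> F x \<in> jac_rad C X Y) \<Longrightarrow> S X Y xs F \<in> jac_rad C X Y"
  by (induction xs) (auto intro: jac_zero jac_add)

lemma jac_one_plus: "r \<in> jac_rad C X X \<Longrightarrow> is_iso C X X (madd C (idt C X) r)"
proof -
  assume r: "r \<in> jac_rad C X X"
  have rh: "r \<in> Hom C X X" using r jac_hom by blast
  have X: "X \<in> Obj C" using rh hom_obj by blast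
  have "is_iso C X X (msub C (idt C X) (cmp C (idt C X) (mneg C r)))"
    using jac_neg[OF r] X id_hom jac_iff by blast
  moreover have "msub C (idt C X) (cmp C (idt C X) (mneg C r)) = madd C (idt C X) r"
    using rh X by (simp add: hom_iff msub_def)
  ultimately show ?thesis by simp
qed

section \<open>Local endomorphism rings\<close>

lemma loc_obj: "local_end C A \<Longrightarrow> A \<in> Obj C" by (simp add: local_end_def)
lemma loc_nz: "local_end C A \<Longrightarrow> idt C A \<noteq> mzero C A A" by (simp add: local_end_def)

lemma loc_split: "local_end C A \<Longrightarrow> a \<in> Hom C A A \<Longrightarrow> b \<in> Hom C A A \<Longrightarrow> madd C a b = idt C A \<Longrightarrow>
   is_iso C A A a \<or> is_iso C A A b"
  unfolding local_end_def using iso_id by metis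

lemma loc_idem: "local_end C A \<Longrightarrow> e \<in> Hom C A A \<Longrightarrow> cmp C e e = e \<Longrightarrow> e = idt C A \<or> e = mzero C A A"
proof -
  assume a: "local_end C A" "e \<in> Hom C A A" "cmp C e e = e"
  have A: "A \<in> Obj C" using a loc_obj by blast
  have oe: "msub C (idt C A) e \<in> Hom C A A" using a A by (simp add: hom_iff)
  have "madd C e (msub C (idt C A) e) = idt C A"
    using a A by (intro add_sub_cancel) (auto simp: hom_iff)
  hence "is_iso C A A e \<or> is_iso C A A (msub C (idt C A) e)" using loc_split[OF a(1) a(2) oe] by blast
  thus ?thesis
  proof
    assume i: "is_iso C A A e"
    have "cmp C e e = cmp C e (idt C A)" using a by (simp add: hom_iff)
    hence "e = idt C A" using iso_cancel_left[OF i a(2), of "idt C A"] A id_hom by blast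
    thus ?thesis ..
  next
    assume i: "is_iso C A A (msub C (idt C A) e)"
    have "cmp C (msub C (idt C A) e) e = msub C e (cmp C e e)" using a A by (simp add: hom_iff cmp_sub_left)
    also have "\<dots> = mzero C A A" using a by (simp add: hom_iff)
    also have "\<dots> = cmp C (msub C (idt C A) e) (mzero C A A)" using oe A by (simp add: hom_iff)
    finally have "e = mzero C A A" using iso_cancel_left[OF i a(2), of "mzero C A A"] A zero_hom by blast
    thus ?thesis ..
  qed
qed

lemma loc_left_inv: "local_end C A \<Longrightarrow> x \<in> Hom C A A \<Longrightarrow> y \<in> Hom C A A \<Longrightarrow> cmp C y x = idt C A \<Longrightarrow> is_iso C A A x"
proof -
  assume a: "local_end C A" "x \<in> Hom C A A" "y \<in> Hom C A A" "cmp C y x = idt C A"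
  have A: "A \<in> Obj C" using a loc_obj by blast
  have eh: "cmp C x y \<in> Hom C A A" using a cmp_hom by blast
  have "cmp C (cmp C x y) (cmp C x y) = cmp C x (cmp C (cmp C y x) y)" using a(2,3) by (simp add: hom_iff assoc)
  also have "\<dots> = cmp C x y" using a by (simp add: hom_iff)
  finally have "cmp C x y = idt C A \<or> cmp C x y = mzero C A A" using loc_idem[OF a(1) eh] by blast
  thus ?thesis
  proof
    assume xy: "cmp C x y = idt C A"
    show ?thesis by (rule iso_intro[OF a(2) a(3) a(3) a(4) xy])
  next
    assume e0: "cmp C x y = mzero C A A"
    have "x = cmp C x (cmp C y x)" using a by (simp add: hom_iff)
    also have "\<dots> = cmp C (cmp C x y) x" using a(2,3) by (simp add: hom_iff assoc)
    also have "\<dots> = mzero C A A" using e0 a A by (simp add: hom_iff)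
    finally have "idt C A = mzero C A A" using a A by (simp add: hom_iff)
    thus ?thesis using a loc_nz by blast
  qed
qed

lemma loc_nonunit_jac: "local_end C A \<Longrightarrow> e \<in> Hom C A A \<Longrightarrow> \<not> is_iso C A A e \<Longrightarrow> e \<in> jac_rad C A A"
proof -
  assume a: "local_end C A" "e \<in> Hom C A A" "\<not> is_iso C A A e"
  have A: "A \<in> Obj C" using a loc_obj by blast
  show ?thesis unfolding jac_iff
  proof (intro conjI ballI)
    show "e \<in> Hom C A A" by fact
    fix g assume g: "g \<in> Hom C A A"
    have ge: "cmp C g e \<in> Hom C A A" using a g cmp_hom by blast
    have ni: "\<not> is_iso C A A (cmp C g e)"
    proof
      assume "is_iso C A A (cmp C g e)"
      then obtain v where v: "v \<in> Hom C A A" "cmp C v (cmp C g e) = idt C A" using is_iso_def by metis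
      have "cmp C (cmp C v g) e = idt C A" using v g a by (simp add: hom_iff assoc)
      hence "is_iso C A A e" using loc_left_inv[OF a(1) a(2), of "cmp C v g"] v g cmp_hom by blast
      thus False using a by blast
    qed
    have oe: "msub C (idt C A) (cmp C g e) \<in> Hom C A A" using ge A by (simp add: hom_iff)
    have "madd C (cmp C g e) (msub C (idt C A) (cmp C g e)) = idt C A"
      using ge A by (intro add_sub_cancel) (auto simp: hom_iff)
    thus "is_iso C A A (msub C (idt C A) (cmp C g e))" using loc_split[OF a(1) ge oe] ni by blast
  qed
qed

lemma loc_hom_jac:
  assumes la: "local_end C A" and lb: "local_end C B" and ni: "\<not> isomorphic C B A" and a: "a \<in> Hom C B A"
  shows "a \<in> jac_rad C B A"
  unfolding jac_iff
proof (intro conjI ballI)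
  show "a \<in> Hom C B A" by fact
  have A: "A \<in> Obj C" and B: "B \<in> Obj C" using la lb loc_obj by auto
  fix g assume g: "g \<in> Hom C A B"
  have ga: "cmp C g a \<in> Hom C B B" using a g cmp_hom by blast
  have nga: "\<not> is_iso C B B (cmp C g a)"
  proof
    assume "is_iso C B B (cmp C g a)"
    then obtain v where v: "v \<in> Hom C B B" "cmp C v (cmp C g a) = idt C B" using is_iso_def by metis
    define y where "y = cmp C v g"
    have y: "y \<in> Hom C A B" using v g cmp_hom y_def by blast
    have ya: "cmp C y a = idt C B" using v g a unfolding y_def by (simp add: hom_iff assoc)
    have eh: "cmp C a y \<in> Hom C A A" using a y cmp_hom by blast
    have "cmp C (cmp C a y) (cmp C a y) = cmp C a (cmp C (cmp C y a) y)" using a y by (simp add: hom_iff assoc)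
    also have "\<dots> = cmp C a y" using ya a y by (simp add: hom_iff)
    finally have "cmp C a y = idt C A \<or> cmp C a y = mzero C A A" using loc_idem[OF la eh] by blast
    thus False
    proof
      assume ay: "cmp C a y = idt C A"
      have "is_iso C B A a" by (rule iso_intro[OF a y y ya ay])
      hence "isomorphic C B A" unfolding isomorphic_def by (rule exI)
      thus False using ni by simp
    next
      assume e0: "cmp C a y = mzero C A A"
      have "a = cmp C a (cmp C y a)" using a ya by (simp add: hom_iff)
      also have "\<dots> = cmp C (cmp C a y) a" using a y by (simp add: hom_iff assoc)
      also have "\<dots> = mzero C B A" using e0 a A by (simp add: hom_iff)
      finally have "idt C B = cmp C y (mzero C B A)" using ya by simp
      also have "\<dots> = mzero C B B" using y B by (simp add: hom_iff)
      finally show False using lb loc_nz by blast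
    qed
  qed
  have "cmp C g a \<in> jac_rad C B B" using loc_nonunit_jac[OF lb ga nga] .
  hence "is_iso C B B (msub C (idt C B) (cmp C (idt C B) (cmp C g a)))" using jac_iff B id_hom by blast
  thus "is_iso C B B (msub C (idt C B) (cmp C g a))" using ga by (simp add: hom_iff)
qed

end

context kc begin

lemma bp_parts:
  assumes "is_biproduct C idx A Y \<iota> \<pi>"
  shows "Y \<in> Obj C" "distinct idx"
    "\<And>a. a \<in> set idx \<Longrightarrow> A a \<in> Obj C" "\<And>a. a \<in> set idx \<Longrightarrow> \<iota> a \<in> Hom C (A a) Y"
    "\<And>a. a \<in> set idx \<Longrightarrow> \<pi> a \<in> Hom C Y (A a)"
    "\<And>a b. a \<in> set idx \<Longrightarrow> b \<in> set idx \<Longrightarrow> cmp C (\<pi> a) (\<iota> b) = (if a = b then idt C (A a) else mzero C (A b) (A a))"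
    "S Y Y idx (\<lambda>a. cmp C (\<iota> a) (\<pi> a)) = idt C Y"
  using assms unfolding is_biproduct_def S_def by auto

lemma bp_intro:
  assumes "Y \<in> Obj C" "distinct idx"
    "\<And>a. a \<in> set idx \<Longrightarrow> A a \<in> Obj C" "\<And>a. a \<in> set idx \<Longrightarrow> \<iota> a \<in> Hom C (A a) Y"
    "\<And>a. a \<in> set idx \<Longrightarrow> \<pi> a \<in> Hom C Y (A a)"
    "\<And>a b. a \<in> set idx \<Longrightarrow> b \<in> set idx \<Longrightarrow> cmp C (\<pi> a) (\<iota> b) = (if a = b then idt C (A a) else mzero C (A b) (A a))"
    "S Y Y idx (\<lambda>a. cmp C (\<iota> a) (\<pi> a)) = idt C Y"
  shows "is_biproduct C idx A Y \<iota> \<pi>"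
  using assms unfolding is_biproduct_def S_def by auto

lemma is_zero_iff: "is_zero_obj C N \<longleftrightarrow> N \<in> Obj C \<and> idt C N = mzero C N N" by (simp add: is_zero_obj_def)

lemma summand_zero:
  assumes i: "i \<in> Hom C A Y" and p: "p \<in> Hom C Y A" and pi: "cmp C p i = idt C A"
    and e: "cmp C i p = mzero C Y Y"
  shows "is_zero_obj C A"
proof -
  have A: "A \<in> Obj C" and Y: "Y \<in> Obj C" using i hom_obj by auto
  have "idt C A = cmp C (cmp C p i) (cmp C p i)" using pi A by simp
  also have "\<dots> = cmp C p (cmp C (cmp C i p) i)" using i p by (simp add: hom_iff assoc)
  also have "\<dots> = mzero C A A" using e i p A Y by (simp add: hom_iff)
  finally show ?thesis using A is_zero_iff by blast
qed

lemma local_indec: "local_end C W \<Longrightarrow> indecomposable C W"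
proof -
  assume l: "local_end C W"
  have W: "W \<in> Obj C" using l loc_obj by blast
  have nz: "\<not> is_zero_obj C W" using l loc_nz is_zero_iff by blast
  have "is_zero_obj C (A 0) \<or> is_zero_obj C (A 1)" if b: "is_biproduct C [0, 1] A W \<iota> \<pi>" for A and \<iota> \<pi> :: "nat \<Rightarrow> 'm"
  proof -
    note bp = bp_parts[OF b]
    have h: "\<iota> 0 \<in> Hom C (A 0) W" "\<iota> 1 \<in> Hom C (A 1) W" "\<pi> 0 \<in> Hom C W (A 0)" "\<pi> 1 \<in> Hom C W (A 1)"
      using bp by auto
    have pi: "cmp C (\<pi> 0) (\<iota> 0) = idt C (A 0)" "cmp C (\<pi> 1) (\<iota> 1) = idt C (A 1)" using bp(6)[of 0 0] bp(6)[of 1 1] by auto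
    have e0h: "cmp C (\<iota> 0) (\<pi> 0) \<in> Hom C W W" "cmp C (\<iota> 1) (\<pi> 1) \<in> Hom C W W" using h cmp_hom by blast+
    have sum: "madd C (cmp C (\<iota> 0) (\<pi> 0)) (cmp C (\<iota> 1) (\<pi> 1)) = idt C W"
      using bp(7) e0h W by (simp add: hom_iff)
    have "cmp C (cmp C (\<iota> 0) (\<pi> 0)) (cmp C (\<iota> 0) (\<pi> 0)) = cmp C (\<iota> 0) (cmp C (cmp C (\<pi> 0) (\<iota> 0)) (\<pi> 0))"
      using h by (simp add: hom_iff assoc)
    also have "\<dots> = cmp C (\<iota> 0) (\<pi> 0)" using pi h by (simp add: hom_iff)
    finally have "cmp C (\<iota> 0) (\<pi> 0) = idt C W \<or> cmp C (\<iota> 0) (\<pi> 0) = mzero C W W"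
      using loc_idem[OF l e0h(1)] by blast
    thus ?thesis
    proof
      assume e: "cmp C (\<iota> 0) (\<pi> 0) = idt C W"
      have z: "madd C (idt C W) (mzero C W W) = idt C W" using W by simp
      have "madd C (idt C W) (cmp C (\<iota> 1) (\<pi> 1)) = madd C (idt C W) (mzero C W W)"
        unfolding z using sum[unfolded e] .
      hence "cmp C (\<iota> 1) (\<pi> 1) = mzero C W W"
        using e0h(2) W by (rule_tac add_cancel[of "idt C W"]) (simp_all add: hom_iff)
      thus ?thesis using summand_zero[OF h(2) h(4) pi(2)] by blast
    next
      assume e: "cmp C (\<iota> 0) (\<pi> 0) = mzero C W W"
      thus ?thesis using summand_zero[OF h(1) h(3) pi(1)] by blast
    qed
  qed
  thus ?thesis unfolding indecomposable_def using W nz by blast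
qed

lemma local_iso_transfer:
  assumes l: "local_end C A" and s: "is_iso C A X s"
  shows "local_end C X"
proof -
  obtain t where t: "t \<in> Hom C X A" "cmp C t s = idt C A" "cmp C s t = idt C X" "is_iso C X A t"
    using iso_inv[OF s] by blast
  have sh: "s \<in> Hom C A X" using s iso_hom by blast
  have A: "A \<in> Obj C" and X: "X \<in> Obj C" using sh hom_obj by auto
  have nz: "idt C X \<noteq> mzero C X X"
  proof
    assume z: "idt C X = mzero C X X"
    have "idt C A = cmp C t (cmp C (idt C X) s)" using t(2) sh t(1) by (simp add: hom_iff)
    also have "\<dots> = cmp C t (cmp C (mzero C X X) s)" using z by simp
    also have "\<dots> = mzero C A A" using sh t(1) A X by (simp add: hom_iff)
    finally show False using l loc_nz by blast
  qed
  have conj_iso: "is_iso C X X a" if a: "a \<in> Hom C X X" "is_iso C A A (cmp C t (cmp C a s))" for a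
  proof -
    have "is_iso C X X (cmp C s (cmp C (cmp C t (cmp C a s)) t))"
      using iso_cmp[OF t(4) iso_cmp[OF that(2) s]] sh t a by (simp add: hom_iff assoc)
    moreover have "cmp C s (cmp C (cmp C t (cmp C a s)) t) = a"
    proof -
      have "cmp C s (cmp C (cmp C t (cmp C a s)) t) = cmp C (cmp C s t) (cmp C a (cmp C s t))"
        using sh t(1) a by (simp add: hom_iff assoc)
      also have "\<dots> = a" using t(3) a by (simp add: hom_iff)
      finally show ?thesis .
    qed
    ultimately show ?thesis by simp
  qed
  have "\<not> is_iso C X X (madd C a b)" if a: "a \<in> Hom C X X" "b \<in> Hom C X X" "\<not> is_iso C X X a" "\<not> is_iso C X X b" for a b
  proof
    assume i: "is_iso C X X (madd C a b)"
    have h1: "cmp C t (cmp C a s) \<in> Hom C A A" "cmp C t (cmp C b s) \<in> Hom C A A"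
      using a sh t(1) by (meson cmp_hom)+
    have n1: "\<not> is_iso C A A (cmp C t (cmp C a s))" using conj_iso a by blast
    have n2: "\<not> is_iso C A A (cmp C t (cmp C b s))" using conj_iso a by blast
    have "\<not> is_iso C A A (madd C (cmp C t (cmp C a s)) (cmp C t (cmp C b s)))"
      using l h1 n1 n2 unfolding local_end_def by blast
    moreover have "madd C (cmp C t (cmp C a s)) (cmp C t (cmp C b s)) = cmp C t (cmp C (madd C a b) s)"
      using a sh t(1) by (simp add: hom_iff dist dist2)
    moreover have "is_iso C A A (cmp C t (cmp C (madd C a b) s))"
      using iso_cmp[OF iso_cmp[OF s i] t(4)] .
    ultimately show False by simp
  qed
  thus ?thesis unfolding local_end_def using X nz by blast
qed

end

context kc begin

lemma indec_local:
  assumes ks: "krull_schmidt C" and ind: "indecomposable C X"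
  shows "local_end C X"
proof -
  have X: "X \<in> Obj C" and nz: "\<not> is_zero_obj C X" using ind unfolding indecomposable_def by auto
  obtain As and \<iota> \<pi> :: "nat \<Rightarrow> 'm" where loc: "\<forall>A\<in>set As. local_end C A"
    and b: "is_biproduct C [0..<length As] (\<lambda>i. As ! i) X \<iota> \<pi>"
    using ks X unfolding krull_schmidt_def by blast
  note bp = bp_parts[OF b]
  define k where "k = length As"
  have locs: "\<And>i. i < k \<Longrightarrow> local_end C (As ! i)" using loc k_def by auto
  have objs: "\<And>i. i < k \<Longrightarrow> As ! i \<in> Obj C" using locs loc_obj by blast
  have hi: "\<And>i. i < k \<Longrightarrow> \<iota> i \<in> Hom C (As ! i) X" and hp: "\<And>i. i < k \<Longrightarrow> \<pi> i \<in> Hom C X (As ! i)"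
    using bp k_def by auto
  have pi: "\<And>i j. i < k \<Longrightarrow> j < k \<Longrightarrow> cmp C (\<pi> i) (\<iota> j) = (if i = j then idt C (As ! i) else mzero C (As ! j) (As ! i))"
    using bp(6) k_def by auto
  have sumX: "S X X [0..<k] (\<lambda>a. cmp C (\<iota> a) (\<pi> a)) = idt C X" using bp(7) k_def by simp
  consider "k = 0" | "k = 1" | "k \<ge> 2" by linarith
  then show ?thesis
  proof cases
    case 1
    hence "idt C X = mzero C X X" using sumX by simp
    thus ?thesis using X nz is_zero_iff by blast
  next
    case 2
    have "S X X [0..<k] (\<lambda>a. cmp C (\<iota> a) (\<pi> a)) = cmp C (\<iota> 0) (\<pi> 0)"
      using 2 hi[of 0] hp[of 0] X by (simp add: hom_iff)
    hence e: "cmp C (\<iota> 0) (\<pi> 0) = idt C X" using sumX by simp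
    have "is_iso C (As ! 0) X (\<iota> 0)"
      using 2 hi[of 0] hp[of 0] pi[of 0 0] e by (intro iso_intro[of _ _ _ "\<pi> 0" "\<pi> 0"]) auto
    thus ?thesis using local_iso_transfer locs 2 by auto
  next
    case 3
    define As' where "As' = tl As"
    have lAs': "length As' = k - 1" using As'_def k_def by simp
    have As'n: "\<And>j. j < k - 1 \<Longrightarrow> As' ! j = As ! (Suc j)" using As'_def k_def 3
      by (simp add: nth_tl)
    have "set As' \<subseteq> Obj C" using As'n lAs' objs by (auto simp: in_set_conv_nth)
    then obtain B and \<iota>' \<pi>' :: "nat \<Rightarrow> 'm" where b': "is_biproduct C [0..<length As'] (\<lambda>i. As' ! i) B \<iota>' \<pi>'"
      using ks unfolding krull_schmidt_def additive_def by blast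
    note bp' = bp_parts[OF b']
    define m where "m = k - 1"
    have B: "B \<in> Obj C" using bp' by simp
    have hi': "\<And>j. j < m \<Longrightarrow> \<iota>' j \<in> Hom C (As ! Suc j) B" and hp': "\<And>j. j < m \<Longrightarrow> \<pi>' j \<in> Hom C B (As ! Suc j)"
      using bp' lAs' As'n m_def by auto
    have pi': "\<And>i j. i < m \<Longrightarrow> j < m \<Longrightarrow> cmp C (\<pi>' i) (\<iota>' j) = (if i = j then idt C (As ! Suc i) else mzero C (As ! Suc j) (As ! Suc i))"
      using bp'(6) lAs' As'n m_def by auto
    have sumB: "S B B [0..<m] (\<lambda>a. cmp C (\<iota>' a) (\<pi>' a)) = idt C B" using bp'(7) lAs' m_def by simp
    have km: "k = Suc m" using 3 m_def by simp
    define A2 where "A2 = (\<lambda>a::nat. if a = 0 then As ! 0 else B)"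
    define F where "F = (\<lambda>j. cmp C (\<iota> (Suc j)) (\<pi>' j))"
    define G where "G = (\<lambda>j. cmp C (\<iota>' j) (\<pi> (Suc j)))"
    define \<iota>2 where "\<iota>2 = (\<lambda>a::nat. if a = 0 then \<iota> 0 else S B X [0..<m] F)"
    define \<pi>2 where "\<pi>2 = (\<lambda>a::nat. if a = 0 then \<pi> 0 else S X B [0..<m] G)"
    have Fh: "\<And>j. j < m \<Longrightarrow> F j \<in> Hom C B X" unfolding F_def using hi hp' km by (meson Suc_less_eq cmp_hom)
    have Gh: "\<And>j. j < m \<Longrightarrow> G j \<in> Hom C X B" unfolding G_def using hi' hp km by (meson Suc_less_eq cmp_hom)
    have i1: "S B X [0..<m] F \<in> Hom C B X" using Fh B X by (intro S_hom) auto
    have p1: "S X B [0..<m] G \<in> Hom C X B" using Gh B X by (intro S_hom) auto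
    have A0: "As ! 0 \<in> Obj C" using objs km by simp
    have i0: "\<iota> 0 \<in> Hom C (As ! 0) X" and p0: "\<pi> 0 \<in> Hom C X (As ! 0)" using hi hp km by auto
    have c00: "cmp C (\<pi> 0) (\<iota> 0) = idt C (As ! 0)" using pi[of 0 0] km by simp
    have c01: "cmp C (\<pi> 0) (S B X [0..<m] F) = mzero C B (As ! 0)"
    proof -
      have "cmp C (\<pi> 0) (S B X [0..<m] F) = S B (As ! 0) [0..<m] (\<lambda>j. cmp C (\<pi> 0) (F j))"
        using p0 B Fh by (intro cmp_S_right) auto
      also have "\<dots> = mzero C B (As ! 0)"
      proof (intro S_zero)
        fix j assume j: "j \<in> set [0..<m]"
        have "cmp C (\<pi> 0) (F j) = cmp C (cmp C (\<pi> 0) (\<iota> (Suc j))) (\<pi>' j)"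
          unfolding F_def using j p0 hi[of "Suc j"] hp'[of j] km by (simp add: hom_iff assoc)
        also have "\<dots> = mzero C B (As ! 0)" using j pi[of 0 "Suc j"] km hp'[of j] A0 by (simp add: hom_iff)
        finally show "cmp C (\<pi> 0) (F j) = mzero C B (As ! 0)" .
      qed (use B A0 in auto)
      finally show ?thesis .
    qed
    have c10: "cmp C (S X B [0..<m] G) (\<iota> 0) = mzero C (As ! 0) B"
    proof -
      have "cmp C (S X B [0..<m] G) (\<iota> 0) = S (As ! 0) B [0..<m] (\<lambda>j. cmp C (G j) (\<iota> 0))"
        using i0 B Gh by (intro cmp_S_left) auto
      also have "\<dots> = mzero C (As ! 0) B"
      proof (intro S_zero)
        fix j assume j: "j \<in> set [0..<m]"
        have "cmp C (G j) (\<iota> 0) = cmp C (\<iota>' j) (cmp C (\<pi> (Suc j)) (\<iota> 0))"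
          unfolding G_def using j i0 hp[of "Suc j"] hi'[of j] km by (simp add: hom_iff assoc)
        also have "\<dots> = mzero C (As ! 0) B" using j pi[of "Suc j" 0] km hi'[of j] A0 by (simp add: hom_iff)
        finally show "cmp C (G j) (\<iota> 0) = mzero C (As ! 0) B" .
      qed (use B A0 in auto)
      finally show ?thesis .
    qed
    have GF: "\<And>i j. i < m \<Longrightarrow> j < m \<Longrightarrow> cmp C (G i) (F j) = (if i = j then cmp C (\<iota>' i) (\<pi>' i) else mzero C B B)"
    proof -
      fix i j assume ij: "i < m" "j < m"
      have "cmp C (G i) (F j) = cmp C (\<iota>' i) (cmp C (cmp C (\<pi> (Suc i)) (\<iota> (Suc j))) (\<pi>' j))"
        unfolding F_def G_def using ij hi[of "Suc j"] hp[of "Suc i"] hi'[of i] hp'[of j] km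
        by (simp add: hom_iff assoc)
      also have "\<dots> = (if i = j then cmp C (\<iota>' i) (\<pi>' i) else mzero C B B)"
        using ij pi[of "Suc i" "Suc j"] km hi'[of i] hp'[of j] B objs[of "Suc i"] objs[of "Suc j"] by (simp add: hom_iff)
      finally show "cmp C (G i) (F j) = (if i = j then cmp C (\<iota>' i) (\<pi>' i) else mzero C B B)" .
    qed
    have c11: "cmp C (S X B [0..<m] G) (S B X [0..<m] F) = idt C B"
    proof -
      have "cmp C (S X B [0..<m] G) (S B X [0..<m] F) = S B B [0..<m] (\<lambda>j. cmp C (S X B [0..<m] G) (F j))"
        using p1 B Fh by (intro cmp_S_right) auto
      also have "\<dots> = S B B [0..<m] (\<lambda>j. S B B [0..<m] (\<lambda>i. cmp C (G i) (F j)))"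
        using Fh Gh B by (intro S_cong cmp_S_left) auto
      also have "\<dots> = S B B [0..<m] (\<lambda>j. cmp C (\<iota>' j) (\<pi>' j))"
      proof (intro S_cong)
        fix j assume j: "j \<in> set [0..<m]"
        show "S B B [0..<m] (\<lambda>i. cmp C (G i) (F j)) = cmp C (\<iota>' j) (\<pi>' j)"
          using j GF Fh Gh B hi'[of j] hp'[of j] by (subst S_single[of _ _ _ j]) (auto intro: cmp_hom[of _ _ "As ! Suc j"] zero_hom)
      qed
      also have "\<dots> = idt C B" by (rule sumB)
      finally show ?thesis .
    qed
    have FG: "\<And>i j. i < m \<Longrightarrow> j < m \<Longrightarrow> cmp C (F i) (G j) = cmp C (\<iota> (Suc i)) (cmp C (cmp C (\<pi>' i) (\<iota>' j)) (\<pi> (Suc j)))"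
      unfolding F_def G_def using hi hp' hi' hp km by (simp add: hom_iff assoc)
    have c_sum: "madd C (cmp C (\<iota> 0) (\<pi> 0)) (cmp C (S B X [0..<m] F) (S X B [0..<m] G)) = idt C X"
    proof -
      have "cmp C (S B X [0..<m] F) (S X B [0..<m] G) = S X X [0..<m] (\<lambda>j. cmp C (S B X [0..<m] F) (G j))"
        using i1 X Gh by (intro cmp_S_right) auto
      also have "\<dots> = S X X [0..<m] (\<lambda>j. S X X [0..<m] (\<lambda>i. cmp C (F i) (G j)))"
        using Fh Gh X by (intro S_cong cmp_S_left) auto
      also have "\<dots> = S X X [0..<m] (\<lambda>j. cmp C (\<iota> (Suc j)) (\<pi> (Suc j)))"
      proof (intro S_cong)
        fix j assume j: "j \<in> set [0..<m]"
        show "S X X [0..<m] (\<lambda>i. cmp C (F i) (G j)) = cmp C (\<iota> (Suc j)) (\<pi> (Suc j))"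
        proof (subst S_single[of _ _ _ j])
          show "cmp C (F j) (G j) = cmp C (\<iota> (Suc j)) (\<pi> (Suc j))"
            using j FG[of j j] pi' hi hp km by (simp add: hom_iff)
          fix i assume i: "i \<in> set [0..<m]" "i \<noteq> j"
          show "cmp C (F i) (G j) = mzero C X X"
            using i j FG[of i j] pi'[of i j] hi[of "Suc i"] hp[of "Suc j"] km X objs[of "Suc i"] objs[of "Suc j"] by (simp add: hom_iff)
        qed (use j Fh Gh X in \<open>auto intro: cmp_hom\<close>)
      qed
      finally have e: "cmp C (S B X [0..<m] F) (S X B [0..<m] G) = S X X [0..<m] (\<lambda>j. cmp C (\<iota> (Suc j)) (\<pi> (Suc j)))" .
      have "[0..<k] = 0 # map Suc [0..<m]" using km by (simp add: upt_conv_Cons map_Suc_upt)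
      hence "S X X [0..<k] (\<lambda>a. cmp C (\<iota> a) (\<pi> a)) = madd C (cmp C (\<iota> 0) (\<pi> 0)) (S X X [0..<m] (\<lambda>j. cmp C (\<iota> (Suc j)) (\<pi> (Suc j))))"
        by (simp add: S_map)
      thus ?thesis using e sumX by simp
    qed
    have bp2: "is_biproduct C [0, 1] A2 X \<iota>2 \<pi>2"
    proof (rule bp_intro)
      show "X \<in> Obj C" by fact
      show "distinct [0::nat, 1]" by simp
      show "\<And>a. a \<in> set [0::nat, 1] \<Longrightarrow> A2 a \<in> Obj C" using A0 B A2_def by auto
      show "\<And>a. a \<in> set [0::nat, 1] \<Longrightarrow> \<iota>2 a \<in> Hom C (A2 a) X" using i0 i1 A2_def \<iota>2_def by auto
      show "\<And>a. a \<in> set [0::nat, 1] \<Longrightarrow> \<pi>2 a \<in> Hom C X (A2 a)" using p0 p1 A2_def \<pi>2_def by auto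
      show "\<And>a b. a \<in> set [0::nat, 1] \<Longrightarrow> b \<in> set [0::nat, 1] \<Longrightarrow>
         cmp C (\<pi>2 a) (\<iota>2 b) = (if a = b then idt C (A2 a) else mzero C (A2 b) (A2 a))"
        using c00 c01 c10 c11 A2_def \<iota>2_def \<pi>2_def by auto
      have "S X X [0::nat, 1] (\<lambda>a. cmp C (\<iota>2 a) (\<pi>2 a)) = madd C (cmp C (\<iota> 0) (\<pi> 0)) (madd C (cmp C (S B X [0..<m] F) (S X B [0..<m] G)) (mzero C X X))"
        using \<iota>2_def \<pi>2_def by simp
      also have "\<dots> = madd C (cmp C (\<iota> 0) (\<pi> 0)) (cmp C (S B X [0..<m] F) (S X B [0..<m] G))"
        using i1 p1 X by (subst add_zero) (auto simp: hom_iff)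
      finally show "S X X [0::nat, 1] (\<lambda>a. cmp C (\<iota>2 a) (\<pi>2 a)) = idt C X" using c_sum by simp
    qed
    have "is_zero_obj C (A2 0) \<or> is_zero_obj C (A2 1)" using ind bp2 unfolding indecomposable_def by blast
    moreover have "\<not> is_zero_obj C (A2 0)" using locs[of 0] km loc_nz is_zero_iff A2_def by auto
    moreover have "\<not> is_zero_obj C B"
    proof
      assume z: "is_zero_obj C B"
      have m0: "0 < m" using km 3 by simp
      have "idt C (As ! 1) = cmp C (\<pi>' 0) (\<iota>' 0)" using pi'[of 0 0] m0 by simp
      also have "\<dots> = cmp C (\<pi>' 0) (cmp C (idt C B) (\<iota>' 0))" using hi'[of 0] m0 by (simp add: hom_iff)
      also have "\<dots> = cmp C (\<pi>' 0) (cmp C (mzero C B B) (\<iota>' 0))" using z is_zero_iff by simp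
      also have "\<dots> = mzero C (As ! 1) (As ! 1)" using hi'[of 0] hp'[of 0] m0 B objs[of 1] km by (simp add: hom_iff)
      finally show False using locs[of 1] km m0 loc_nz by auto
    qed
    ultimately show ?thesis using A2_def by simp
  qed
qed

end


lemma dep_lemma:
  fixes v :: "'a \<Rightarrow> nat \<Rightarrow> 'k::field"
  assumes "finite S" "card S > N" "\<forall>k\<in>S. \<forall>l\<ge>N. v k l = 0"
  shows "\<exists>c. (\<exists>k\<in>S. c k \<noteq> 0) \<and> (\<forall>l. (\<Sum>k\<in>S. c k * v k l) = 0)"
  using assms
proof (induction N arbitrary: S v)
  case 0
  then obtain k0 where k0: "k0 \<in> S" by fastforce
  let ?c = "\<lambda>k. if k = k0 then (1::'k) else 0"
  have "\<forall>l. (\<Sum>k\<in>S. ?c k * v k l) = 0"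
  proof
    fix l
    have "(\<Sum>k\<in>S. ?c k * v k l) = (\<Sum>k\<in>S. if k = k0 then v k l else 0)" by (intro sum.cong) auto
    also have "\<dots> = v k0 l" using k0 0 by (simp add: sum.delta)
    also have "\<dots> = 0" using 0 k0 by auto
    finally show "(\<Sum>k\<in>S. ?c k * v k l) = 0" .
  qed
  thus ?case using k0 by (intro exI[of _ ?c]) auto
next
  case (Suc N)
  show ?case
  proof (cases "\<forall>k\<in>S. v k N = 0")
    case True
    have "\<forall>k\<in>S. \<forall>l\<ge>N. v k l = 0" using True Suc.prems(3) by (metis le_antisym not_less_eq_eq)
    thus ?thesis using Suc.IH[of S v] Suc.prems by simp
  next
    case False
    then obtain k0 where k0: "k0 \<in> S" "v k0 N \<noteq> 0" by blast
    define S' where "S' = S - {k0}"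
    define w where "w = (\<lambda>k l. v k l - (v k N / v k0 N) * v k0 l)"
    have fS': "finite S'" using Suc.prems S'_def by simp
    have cS': "card S' > N" using Suc.prems k0 S'_def by simp
    have wz: "\<forall>k\<in>S'. \<forall>l\<ge>N. w k l = 0"
    proof (intro ballI allI impI)
      fix k l assume k: "k \<in> S'" and l: "N \<le> l"
      show "w k l = 0"
      proof (cases "l = N")
        case True thus ?thesis using k0 by (simp add: w_def)
      next
        case False
        hence "Suc N \<le> l" using l by simp
        thus ?thesis using Suc.prems(3) k k0 S'_def by (simp add: w_def)
      qed
    qed
    obtain c' where c': "\<exists>k\<in>S'. c' k \<noteq> 0" "\<forall>l. (\<Sum>k\<in>S'. c' k * w k l) = 0"
      using Suc.IH[OF fS' cS' wz] by blast
    define t where "t = (\<Sum>k\<in>S'. c' k * v k N) / v k0 N"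
    define c where "c = (\<lambda>k. if k = k0 then - t else c' k)"
    have "(\<Sum>k\<in>S. c k * v k l) = 0" for l
    proof -
      have "(\<Sum>k\<in>S. c k * v k l) = c k0 * v k0 l + (\<Sum>k\<in>S'. c k * v k l)"
        using Suc.prems(1) k0 S'_def by (simp add: sum.remove)
      also have "(\<Sum>k\<in>S'. c k * v k l) = (\<Sum>k\<in>S'. c' k * v k l)"
        using S'_def c_def by (intro sum.cong) auto
      also have "\<dots> = (\<Sum>k\<in>S'. c' k * w k l + c' k * (v k N / v k0 N) * v k0 l)"
        by (intro sum.cong) (auto simp: w_def algebra_simps)
      also have "\<dots> = (\<Sum>k\<in>S'. c' k * w k l) + (\<Sum>k\<in>S'. c' k * (v k N / v k0 N) * v k0 l)"
        by (rule sum.distrib)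
      also have "(\<Sum>k\<in>S'. c' k * (v k N / v k0 N) * v k0 l) = t * v k0 l"
        unfolding t_def by (simp add: sum_distrib_right sum_divide_distrib)
      finally show ?thesis using c' c_def by simp
    qed
    moreover have "\<exists>k\<in>S. c k \<noteq> 0" using c' S'_def c_def by auto
    ultimately show ?thesis by blast
  qed
qed

context kc begin

primrec H :: "'o \<Rightarrow> 'm \<Rightarrow> 'k list \<Rightarrow> 'm" where
  "H W e [] = mzero C W W"
| "H W e (a # as) = madd C (smul C a (idt C W)) (cmp C e (H W e as))"

lemma H_hom: "W \<in> Obj C \<Longrightarrow> e \<in> Hom C W W \<Longrightarrow> H W e as \<in> Hom C W W"
  by (induction as) (auto simp: zero_hom add_hom smul_hom id_hom cmp_hom)

definition Ev :: "'o \<Rightarrow> 'm \<Rightarrow> 'k poly \<Rightarrow> 'm" where "Ev W e p = H W e (coeffs p)"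

lemma Ev_hom: "W \<in> Obj C \<Longrightarrow> e \<in> Hom C W W \<Longrightarrow> Ev W e p \<in> Hom C W W"
  unfolding Ev_def by (rule H_hom)

lemma Ev_0[simp]: "Ev W e 0 = mzero C W W" by (simp add: Ev_def)

lemma Ev_pCons: "W \<in> Obj C \<Longrightarrow> e \<in> Hom C W W \<Longrightarrow> Ev W e (pCons a p) = madd C (smul C a (idt C W)) (cmp C e (Ev W e p))"
proof -
  assume W: "W \<in> Obj C" and e: "e \<in> Hom C W W"
  have "H W e (cCons a (coeffs p)) = H W e (a # coeffs p)"
  proof (cases "coeffs p = [] \<and> a = 0")
    case True
    then show ?thesis using W e by (simp add: hom_iff)
  next
    case False
    then show ?thesis by (auto simp: cCons_def)
  qed
  thus ?thesis by (simp add: Ev_def)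
qed

lemma Ev_add: "W \<in> Obj C \<Longrightarrow> e \<in> Hom C W W \<Longrightarrow> Ev W e (p + q) = madd C (Ev W e p) (Ev W e q)"
proof (induction p q rule: poly_induct2)
  case 0
  then show ?case by simp
next
  case (pCons a p b q)
  have h: "Ev W e p \<in> Hom C W W" "Ev W e q \<in> Hom C W W" using pCons Ev_hom by auto
  have "Ev W e (pCons a p + pCons b q) = madd C (smul C (a + b) (idt C W)) (cmp C e (madd C (Ev W e p) (Ev W e q)))"
    using pCons by (simp add: Ev_pCons)
  also have "\<dots> = madd C (madd C (smul C a (idt C W)) (smul C b (idt C W))) (madd C (cmp C e (Ev W e p)) (cmp C e (Ev W e q)))"
    using pCons.prems h by (simp add: hom_iff add_smul dist2)
  also have "\<dots> = madd C (madd C (smul C a (idt C W)) (cmp C e (Ev W e p))) (madd C (smul C b (idt C W)) (cmp C e (Ev W e q)))"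
    using pCons.prems h by (simp add: hom_iff add_assoc add_left_comm)
  finally show ?case using pCons.prems by (simp add: Ev_pCons)
qed

lemma Ev_smult: "W \<in> Obj C \<Longrightarrow> e \<in> Hom C W W \<Longrightarrow> Ev W e (smult c p) = smul C c (Ev W e p)"
proof (induction p)
  case 0
  then show ?case by simp
next
  case (pCons a p)
  have h: "Ev W e p \<in> Hom C W W" using pCons Ev_hom by auto
  show ?case using pCons h by (simp add: Ev_pCons hom_iff smul_add mult.commute)
qed

lemma Ev_linear_factor:
  assumes W: "W \<in> Obj C" and e: "e \<in> Hom C W W"
  shows "Ev W e ([:- x, 1:] * q) = cmp C (msub C e (smul C x (idt C W))) (Ev W e q)"
proof -
  have h: "Ev W e q \<in> Hom C W W" using W e Ev_hom by auto
  have "[:- x, 1:] * q = smult (- x) q + pCons 0 q" by (simp add: mult_pCons_left)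
  hence "Ev W e ([:- x, 1:] * q) = Ev W e (smult (- x) q + pCons 0 q)" by (simp only:)
  also have "\<dots> = madd C (Ev W e (smult (- x) q)) (Ev W e (pCons 0 q))" by (rule Ev_add[OF W e])
  also have "\<dots> = madd C (smul C (- x) (Ev W e q)) (cmp C e (Ev W e q))"
    unfolding Ev_smult[OF W e] Ev_pCons[OF W e] using W e h by (simp add: hom_iff)
  also have "\<dots> = cmp C (msub C e (smul C x (idt C W))) (Ev W e q)"
    using W e h by (simp add: hom_iff msub_def mneg_def dist add_comm)
  finally show ?thesis .
qed

end

context kc begin

definition pw :: "'o \<Rightarrow> 'm \<Rightarrow> nat \<Rightarrow> 'm" where "pw W e n = (cmp C e ^^ n) (idt C W)"

lemma pw_hom: "W \<in> Obj C \<Longrightarrow> e \<in> Hom C W W \<Longrightarrow> pw W e n \<in> Hom C W W"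
  by (induction n) (auto simp: pw_def id_hom cmp_hom)

lemma pw_0: "pw W e 0 = idt C W" by (simp add: pw_def)
lemma pw_Suc: "pw W e (Suc n) = cmp C e (pw W e n)" by (simp add: pw_def)

lemma Ev_Poly: "W \<in> Obj C \<Longrightarrow> e \<in> Hom C W W \<Longrightarrow>
  Ev W e (Poly cs) = S W W [0..<length cs] (\<lambda>n. smul C (cs ! n) (pw W e n))"
proof (induction cs)
  case Nil
  then show ?case by simp
next
  case (Cons a cs)
  have hs: "\<And>n. smul C (cs ! n) (pw W e n) \<in> Hom C W W" using Cons.prems pw_hom smul_hom by blast
  have "Ev W e (Poly (a # cs)) = madd C (smul C a (idt C W)) (cmp C e (S W W [0..<length cs] (\<lambda>n. smul C (cs ! n) (pw W e n))))"
    using Cons by (simp add: Ev_pCons)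
  also have "cmp C e (S W W [0..<length cs] (\<lambda>n. smul C (cs ! n) (pw W e n))) = S W W [0..<length cs] (\<lambda>n. cmp C e (smul C (cs ! n) (pw W e n)))"
    using Cons.prems hs by (intro cmp_S_right) auto
  also have "\<dots> = S W W [0..<length cs] (\<lambda>n. smul C ((a # cs) ! Suc n) (pw W e (Suc n)))"
  proof (intro S_cong)
    fix n
    have "pw W e n \<in> Hom C W W" using Cons.prems pw_hom by blast
    thus "cmp C e (smul C (cs ! n) (pw W e n)) = smul C ((a # cs) ! Suc n) (pw W e (Suc n))"
      using Cons.prems by (simp add: pw_Suc hom_iff)
  qed
  finally have "Ev W e (Poly (a # cs)) = madd C (smul C ((a # cs) ! 0) (pw W e 0)) (S W W (map Suc [0..<length cs]) (\<lambda>n. smul C ((a # cs) ! n) (pw W e n)))"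
    by (simp add: pw_0 S_map)
  also have "\<dots> = S W W (0 # map Suc [0..<length cs]) (\<lambda>n. smul C ((a # cs) ! n) (pw W e n))" by simp
  also have "0 # map Suc [0..<length cs] = [0..<length (a # cs)]"
    by (simp only: length_Cons map_Suc_upt) (rule upt_conv_Cons[symmetric], simp)
  finally show ?case .
qed

lemma S_smul_scalar: "x \<in> Hom C X Y \<Longrightarrow> S X Y xs (\<lambda>n. smul C (a n) x) = smul C (sum_list (map a xs)) x"
proof (induction xs)
  case Nil
  then show ?case by (simp add: hom_iff)
next
  case (Cons y xs)
  then show ?case by (simp add: add_smul hom_iff)
qed

lemma root_lemma:
  assumes ac: "alg_closed TYPE('k)" and l: "local_end C W" and e: "e \<in> Hom C W W"
  shows "p \<noteq> 0 \<Longrightarrow> Ev W e p = mzero C W W \<Longrightarrow> \<exists>x. \<not> is_iso C W W (msub C e (smul C x (idt C W)))"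
proof (induction "degree p" arbitrary: p rule: less_induct)
  case less
  have W: "W \<in> Obj C" using l loc_obj by blast
  show ?case
  proof (cases "degree p = 0")
    case True
    define a where "a = coeff p 0"
    have p: "p = pCons a 0" using degree_0_id[OF True] a_def by simp
    have a0: "a \<noteq> 0" using less.prems p by auto
    have "Ev W e p = smul C a (idt C W)" using p W e by (simp add: Ev_pCons hom_iff)
    hence z: "smul C a (idt C W) = mzero C W W" using less.prems by simp
    have "idt C W = smul C (inverse a) (smul C a (idt C W))" using a0 W by simp
    also have "\<dots> = mzero C W W" unfolding z using W by simp
    finally show ?thesis using l loc_nz by blast
  next
    case False
    then obtain x where "poly p x = 0" using ac unfolding alg_closed_def by blast
    then obtain q where pq: "p = [:- x, 1:] * q" using poly_eq_0_iff_dvd by (metis dvdE)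
    have q0: "q \<noteq> 0" using pq less.prems by auto
    have "degree p = degree [:- x, 1:] + degree q" unfolding pq by (rule degree_mult_eq) (use q0 in auto)
    hence dq: "degree q < degree p" by simp
    have Evp: "cmp C (msub C e (smul C x (idt C W))) (Ev W e q) = mzero C W W"
      using less.prems(2) unfolding pq Ev_linear_factor[OF W e] .
    show ?thesis
    proof (cases "is_iso C W W (msub C e (smul C x (idt C W)))")
      case True
      have eh: "msub C e (smul C x (idt C W)) \<in> Hom C W W" using e W by (simp add: hom_iff)
      have "cmp C (msub C e (smul C x (idt C W))) (Ev W e q) = cmp C (msub C e (smul C x (idt C W))) (mzero C W W)"
        using Evp eh W by (simp add: hom_iff)
      hence "Ev W e q = mzero C W W" using iso_cancel_left[OF True] Ev_hom[OF W e] zero_hom[OF W W] by blast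
      thus ?thesis using less.hyps[OF dq q0] by blast
    next
      case False
      thus ?thesis by blast
    qed
  qed
qed

lemma eigen:
  assumes ac: "alg_closed TYPE('k)" and hf: "hom_finite C" and l: "local_end C W" and e: "e \<in> Hom C W W"
  shows "\<exists>x. msub C e (smul C x (idt C W)) \<in> jac_rad C W W"
proof -
  have W: "W \<in> Obj C" using l loc_obj by blast
  obtain bs where bs: "set bs \<subseteq> Hom C W W" "\<forall>h\<in>Hom C W W. \<exists>cs. length cs = length bs \<and> h = lincomb C W W cs bs"
    using hf W unfolding hom_finite_def by blast
  define N where "N = length bs"
  define cs where "cs = (\<lambda>n. SOME cs. length cs = N \<and> pw W e n = lincomb C W W cs bs)"
  have csp: "length (cs n) = N \<and> pw W e n = lincomb C W W (cs n) bs" for n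
  proof -
    have "\<exists>cs. length cs = N \<and> pw W e n = lincomb C W W cs bs" using bs(2) pw_hom[OF W e] N_def by blast
    thus ?thesis unfolding cs_def by (rule someI_ex)
  qed
  define co where "co = (\<lambda>n l. if l < N then cs n ! l else 0)"
  have bh: "\<And>l. l < N \<Longrightarrow> bs ! l \<in> Hom C W W" using bs(1) N_def by auto
  have pwS: "pw W e n = S W W [0..<N] (\<lambda>l. smul C (co n l) (bs ! l))" for n
  proof -
    have "pw W e n = S W W [0..<N] (\<lambda>l. smul C (cs n ! l) (bs ! l))" using csp[of n] lincomb_S N_def by metis
    also have "\<dots> = S W W [0..<N] (\<lambda>l. smul C (co n l) (bs ! l))" by (intro S_cong) (simp add: co_def)
    finally show ?thesis .
  qed
  obtain c where c: "\<exists>k\<in>{0..<Suc N}. c k \<noteq> 0" "\<forall>l. (\<Sum>k\<in>{0..<Suc N}. c k * co k l) = 0"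
    using dep_lemma[of "{0..<Suc N}" N co] by (auto simp: co_def)
  define p where "p = Poly (map c [0..<Suc N])"
  have p0: "p \<noteq> 0"
  proof
    assume "p = 0"
    hence "\<forall>k. coeff p k = 0" by simp
    moreover obtain k where "k < Suc N" "c k \<noteq> 0" using c(1) by auto
    ultimately have "coeff p k = 0" "c k \<noteq> 0" "k < Suc N" by auto
    moreover have "coeff p k = map c [0..<Suc N] ! k" unfolding p_def using \<open>k < Suc N\<close>
      by (simp only: coeff_Poly_eq nth_default_def length_map length_upt) simp
    ultimately show False using nth_map_upt[of k "Suc N" 0 c] by simp
  qed
  have "Ev W e p = S W W [0..<Suc N] (\<lambda>n. smul C (map c [0..<Suc N] ! n) (pw W e n))"
    unfolding p_def Ev_Poly[OF W e] length_map length_upt diff_zero ..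
  also have "\<dots> = S W W [0..<Suc N] (\<lambda>n. smul C (c n) (pw W e n))"
  proof (intro S_cong)
    fix n assume "n \<in> set [0..<Suc N]"
    hence "n < Suc N" by (simp only: set_upt atLeastLessThan_iff)
    thus "smul C (map c [0..<Suc N] ! n) (pw W e n) = smul C (c n) (pw W e n)" by (simp only: nth_map_upt) simp
  qed
  also have "\<dots> = S W W [0..<Suc N] (\<lambda>n. S W W [0..<N] (\<lambda>l. smul C (c n * co n l) (bs ! l)))"
  proof (intro S_cong)
    fix n
    have "smul C (c n) (pw W e n) = S W W [0..<N] (\<lambda>l. smul C (c n) (smul C (co n l) (bs ! l)))"
      unfolding pwS[of n] using W bh by (intro S_smul) (auto intro: smul_hom)
    also have "\<dots> = S W W [0..<N] (\<lambda>l. smul C (c n * co n l) (bs ! l))"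
      using bh by (intro S_cong) (simp add: hom_iff)
    finally show "smul C (c n) (pw W e n) = S W W [0..<N] (\<lambda>l. smul C (c n * co n l) (bs ! l))" .
  qed
  also have "\<dots> = S W W [0..<N] (\<lambda>l. S W W [0..<Suc N] (\<lambda>n. smul C (c n * co n l) (bs ! l)))"
    using W bh by (intro S_swap) (auto intro: smul_hom)
  also have "\<dots> = S W W [0..<N] (\<lambda>l. mzero C W W)"
  proof (intro S_cong)
    fix l assume l: "l \<in> set [0..<N]"
    have "S W W [0..<Suc N] (\<lambda>n. smul C (c n * co n l) (bs ! l)) = smul C (sum_list (map (\<lambda>n. c n * co n l) [0..<Suc N])) (bs ! l)"
      using bh l by (intro S_smul_scalar) auto
    also have "sum_list (map (\<lambda>n. c n * co n l) [0..<Suc N]) = 0"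
    proof -
      have "sum_list (map (\<lambda>n. c n * co n l) [0..<Suc N]) = (\<Sum>k\<in>{0..<Suc N}. c k * co k l)"
        using sum_set_upt_conv_sum_list_nat[of "\<lambda>n. c n * co n l" 0 "Suc N"] unfolding set_upt by (rule sym)
      thus ?thesis using c(2) by simp
    qed
    finally show "S W W [0..<Suc N] (\<lambda>n. smul C (c n * co n l) (bs ! l)) = mzero C W W"
      using bh l by (simp add: hom_iff)
  qed
  also have "\<dots> = mzero C W W" using W by (intro S_zero) auto
  finally have "Ev W e p = mzero C W W" .
  then obtain x where x: "\<not> is_iso C W W (msub C e (smul C x (idt C W)))" using root_lemma[OF ac l e p0] by blast
  have "msub C e (smul C x (idt C W)) \<in> Hom C W W" using e W by (simp add: hom_iff)
  thus ?thesis using loc_nonunit_jac[OF l _ x] by blast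
qed

end

context kc begin

lemma ideal_hom: "is_ideal C I \<Longrightarrow> x \<in> I X Y \<Longrightarrow> x \<in> Hom C X Y"
proof -
  assume "is_ideal C I" "x \<in> I X Y"
  thus ?thesis using conjunct1[OF \<open>is_ideal C I\<close>[unfolded is_ideal_def]] by (meson subsetD)
qed
lemma ideal_zero: "is_ideal C I \<Longrightarrow> X \<in> Obj C \<Longrightarrow> Y \<in> Obj C \<Longrightarrow> mzero C X Y \<in> I X Y"
proof -
  assume a: "is_ideal C I" "X \<in> Obj C" "Y \<in> Obj C"
  note h = a(1)[unfolded is_ideal_def, THEN conjunct2, THEN conjunct1, rule_format, OF a(2) a(3)]
  show ?thesis by (rule h[THEN conjunct1])
qed
lemma ideal_add: "is_ideal C I \<Longrightarrow> x \<in> I X Y \<Longrightarrow> y \<in> I X Y \<Longrightarrow> madd C x y \<in> I X Y"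
proof -
  assume a: "is_ideal C I" "x \<in> I X Y" "y \<in> I X Y"
  have o: "X \<in> Obj C" "Y \<in> Obj C" using a ideal_hom hom_obj by blast+
  note h = a(1)[unfolded is_ideal_def, THEN conjunct2, THEN conjunct1, rule_format, OF o]
  show ?thesis using h[THEN conjunct2, THEN conjunct1] a(2,3) by blast
qed
lemma ideal_cmpR: "is_ideal C I \<Longrightarrow> x \<in> I X Y \<Longrightarrow> h \<in> Hom C W X \<Longrightarrow> cmp C x h \<in> I W Y"
proof -
  assume a: "is_ideal C I" "x \<in> I X Y" "h \<in> Hom C W X"
  note h = a(1)[unfolded is_ideal_def, THEN conjunct2, THEN conjunct2, THEN conjunct1, rule_format]
  show ?thesis using h[OF a(2) a(3)] .
qed
lemma ideal_cmpL: "is_ideal C I \<Longrightarrow> x \<in> I X Y \<Longrightarrow> g \<in> Hom C Y Z \<Longrightarrow> cmp C g x \<in> I X Z"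
proof -
  assume a: "is_ideal C I" "x \<in> I X Y" "g \<in> Hom C Y Z"
  note h = a(1)[unfolded is_ideal_def, THEN conjunct2, THEN conjunct2, THEN conjunct2, rule_format]
  show ?thesis using h[OF a(2) a(3)] .
qed
lemma ideal_smul: "is_ideal C I \<Longrightarrow> x \<in> I X Y \<Longrightarrow> smul C c x \<in> I X Y"
proof -
  assume a: "is_ideal C I" "x \<in> I X Y"
  have xh: "x \<in> Hom C X Y" using a ideal_hom by blast
  hence Y: "Y \<in> Obj C" using hom_obj by blast
  have "cmp C (smul C c (idt C Y)) x \<in> I X Y" using a Y by (intro ideal_cmpL) (auto intro: smul_hom id_hom)
  thus ?thesis using xh Y by (simp add: hom_iff)
qed
lemma ideal_S: "is_ideal C I \<Longrightarrow> X \<in> Obj C \<Longrightarrow> Y \<in> Obj C \<Longrightarrow> (\<And>x. x \<in> set xs \<Longrightarrow> F x \<in> I X Y) \<Longrightarrow> S X Y xs F \<in> I X Y"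
  by (induction xs) (auto intro: ideal_zero ideal_add)

lemma ip_hom: "x \<in> ideal_prod C A B X Y \<Longrightarrow> (\<And>X Y. A X Y \<subseteq> Hom C X Y) \<Longrightarrow> (\<And>X Y. B X Y \<subseteq> Hom C X Y) \<Longrightarrow> X \<in> Obj C \<Longrightarrow> Y \<in> Obj C \<Longrightarrow>
  x \<in> Hom C X Y"
proof (induction rule: ideal_prod.induct)
  case ip_zero
  then show ?case by (simp add: zero_hom)
next
  case (ip_step b W a s)
  then show ?case by (meson add_hom cmp_hom subsetD)
qed

lemma ip_add: "x \<in> ideal_prod C A B X Y \<Longrightarrow> (\<And>X Y. A X Y \<subseteq> Hom C X Y) \<Longrightarrow> (\<And>X Y. B X Y \<subseteq> Hom C X Y) \<Longrightarrow> X \<in> Obj C \<Longrightarrow> Y \<in> Obj C \<Longrightarrow>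
  y \<in> ideal_prod C A B X Y \<Longrightarrow> madd C x y \<in> ideal_prod C A B X Y"
proof (induction rule: ideal_prod.induct)
  case ip_zero
  then show ?case using ip_hom[of y A B X Y] by (simp add: hom_iff)
next
  case (ip_step b W a s)
  have ab: "cmp C a b \<in> Hom C X Y" using ip_step by (meson cmp_hom subsetD)
  have s: "s \<in> Hom C X Y" using ip_step ip_hom by blast
  have y: "y \<in> Hom C X Y" using ip_step ip_hom by blast
  have "madd C (madd C (cmp C a b) s) y = madd C (cmp C a b) (madd C s y)"
    using ab s y by (intro add_assoc) (auto simp: hom_iff)
  moreover have "madd C (cmp C a b) (madd C s y) \<in> ideal_prod C A B X Y"
    using ip_step by (intro ideal_prod.ip_step) auto
  ultimately show ?case by simp
qed

lemma ip_single: "(\<And>X Y. A X Y \<subseteq> Hom C X Y) \<Longrightarrow> (\<And>X Y. B X Y \<subseteq> Hom C X Y) \<Longrightarrow> X \<in> Obj C \<Longrightarrow> Y \<in> Obj C \<Longrightarrow>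
  b \<in> B X W \<Longrightarrow> a \<in> A W Y \<Longrightarrow> cmp C a b \<in> ideal_prod C A B X Y"
proof -
  assume h: "\<And>X Y. A X Y \<subseteq> Hom C X Y" "\<And>X Y. B X Y \<subseteq> Hom C X Y" "X \<in> Obj C" "Y \<in> Obj C"
    "b \<in> B X W" "a \<in> A W Y"
  have "madd C (cmp C a b) (mzero C X Y) \<in> ideal_prod C A B X Y"
    using h by (intro ideal_prod.ip_step ideal_prod.ip_zero)
  moreover have "cmp C a b \<in> Hom C X Y" using h by (meson cmp_hom subsetD)
  ultimately show ?thesis by (simp add: hom_iff)
qed

lemma ip_S: "(\<And>X Y. A X Y \<subseteq> Hom C X Y) \<Longrightarrow> (\<And>X Y. B X Y \<subseteq> Hom C X Y) \<Longrightarrow> X \<in> Obj C \<Longrightarrow> Y \<in> Obj C \<Longrightarrow>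
  (\<And>x. x \<in> set xs \<Longrightarrow> F x \<in> ideal_prod C A B X Y) \<Longrightarrow> S X Y xs F \<in> ideal_prod C A B X Y"
proof (induction xs)
  case Nil
  then show ?case by (simp add: ideal_prod.ip_zero)
next
  case (Cons a xs)
  then show ?case using ip_add[of "F a" A B X Y "S X Y xs F"] by simp
qed

lemma jac_sub_hom: "jac_rad C X Y \<subseteq> Hom C X Y" using jac_hom by blast

lemma add_swap: "arr a \<Longrightarrow> arr b \<Longrightarrow> arr c \<Longrightarrow> arr d \<Longrightarrow> dm b = dm a \<Longrightarrow> cd b = cd a \<Longrightarrow> dm c = dm a \<Longrightarrow> cd c = cd a
  \<Longrightarrow> dm d = dm a \<Longrightarrow> cd d = cd a \<Longrightarrow> madd C (madd C a b) (madd C c d) = madd C (madd C a c) (madd C b d)"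
proof -
  assume h: "arr a" "arr b" "arr c" "arr d" "dm b = dm a" "cd b = cd a" "dm c = dm a" "cd c = cd a" "dm d = dm a" "cd d = cd a"
  have "madd C (madd C a b) (madd C c d) = madd C a (madd C b (madd C c d))" using h by (intro add_assoc) auto
  also have "madd C b (madd C c d) = madd C c (madd C b d)" using h by (intro add_left_comm) auto
  also have "madd C a (madd C c (madd C b d)) = madd C (madd C a c) (madd C b d)" using h by (intro add_assoc[symmetric]) auto
  finally show ?thesis .
qed

lemma set_bp_index: "set (bp_index n m) = {(i, j). i < n \<and> j < m i}"
  by (auto simp: bp_index_def)

end


locale p1 = kc C for C :: "('o, 'm, 'k::field) kcat" +
  fixes I :: "'o \<Rightarrow> 'o \<Rightarrow> 'm set" and X Y :: 'o and n :: nat and m :: "nat \<Rightarrow> nat"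
    and Ys :: "nat \<Rightarrow> 'o" and \<iota> \<pi> :: "nat \<times> nat \<Rightarrow> 'm" and f :: 'm and fc :: "nat \<Rightarrow> nat \<Rightarrow> 'm"
  assumes ac: "alg_closed TYPE('k)" and hf: "hom_finite C" and ks: "krull_schmidt C"
    and idl: "is_ideal C I" and ffl: "\<forall>X\<in>Obj C. \<exists>A f. left_approx C I X A f"
    and Xo: "X \<in> Obj C"
    and indY: "\<forall>i<n. indecomposable C (Ys i)"
    and noniso: "\<forall>i<n. \<forall>j<n. i \<noteq> j \<longrightarrow> \<not> isomorphic C (Ys i) (Ys j)"
    and bp: "is_biproduct C (bp_index n m) (\<lambda>(i, j). Ys i) Y \<iota> \<pi>"
    and fh: "f \<in> Hom C X Y"
    and comp: "\<forall>i<n. \<forall>j<m i. cmp C (\<pi> (i, j)) f = fc i j \<and> fc i j \<in> I X (Ys i)"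
    and basis: "\<forall>i<n. irr_minus_basis C I X (Ys i) (map (fc i) [0..<m i])"
    and cond: "\<forall>Y'. indecomposable C Y' \<and> irr_minus_nonzero C I X Y' \<longrightarrow> (\<exists>i<n. isomorphic C Y' (Ys i))"
begin

abbreviation "idx \<equiv> bp_index n m"
abbreviation "JI \<equiv> ideal_prod C (jac_rad C) I"

lemma idx_mem: "(i, j) \<in> set idx \<longleftrightarrow> i < n \<and> j < m i" by (simp add: set_bp_index)

lemma idx_cases: "a \<in> set idx \<Longrightarrow> (\<And>i j. a = (i, j) \<Longrightarrow> i < n \<Longrightarrow> j < m i \<Longrightarrow> P) \<Longrightarrow> P"
  using idx_mem by (cases a) auto

lemma Yo: "Y \<in> Obj C" using bp_parts[OF bp] by simp
lemma idx_dist: "distinct idx" using bp_parts[OF bp] by simp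
lemma Ys_obj: "i < n \<Longrightarrow> Ys i \<in> Obj C"
proof -
  assume "i < n"
  hence "indecomposable C (Ys i)" using indY by blast
  thus ?thesis by (simp add: indecomposable_def)
qed
lemma Ys_loc: "i < n \<Longrightarrow> local_end C (Ys i)"
proof -
  assume "i < n"
  hence "indecomposable C (Ys i)" using indY by blast
  thus ?thesis by (rule indec_local[OF ks])
qed
lemma iota_hom: "i < n \<Longrightarrow> j < m i \<Longrightarrow> \<iota> (i, j) \<in> Hom C (Ys i) Y"
  using bp_parts(4)[OF bp, of "(i, j)"] idx_mem by simp
lemma pi_hom: "i < n \<Longrightarrow> j < m i \<Longrightarrow> \<pi> (i, j) \<in> Hom C Y (Ys i)"
  using bp_parts(5)[OF bp, of "(i, j)"] idx_mem by simp
lemma pi_iota: "i < n \<Longrightarrow> j < m i \<Longrightarrow> i' < n \<Longrightarrow> j' < m i' \<Longrightarrow>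
  cmp C (\<pi> (i, j)) (\<iota> (i', j')) = (if (i, j) = (i', j') then idt C (Ys i) else mzero C (Ys i') (Ys i))"
  using bp_parts(6)[OF bp, of "(i, j)" "(i', j')"] idx_mem by simp
lemma bp_sum: "S Y Y idx (\<lambda>a. cmp C (\<iota> a) (\<pi> a)) = idt C Y"
  using bp_parts(7)[OF bp] by (simp add: case_prod_beta)
lemma iota_hom': "a \<in> set idx \<Longrightarrow> \<iota> a \<in> Hom C (Ys (fst a)) Y"
  using iota_hom idx_mem by (cases a) auto
lemma pi_hom': "a \<in> set idx \<Longrightarrow> \<pi> a \<in> Hom C Y (Ys (fst a))"
  using pi_hom idx_mem by (cases a) auto
lemma ip_hom': "a \<in> set idx \<Longrightarrow> cmp C (\<iota> a) (\<pi> a) \<in> Hom C Y Y"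
  using iota_hom' pi_hom' cmp_hom by blast
lemma fc_eq: "i < n \<Longrightarrow> j < m i \<Longrightarrow> cmp C (\<pi> (i, j)) f = fc i j" using comp by blast
lemma fc_I: "i < n \<Longrightarrow> j < m i \<Longrightarrow> fc i j \<in> I X (Ys i)" using comp by blast
lemma fc_hom: "i < n \<Longrightarrow> j < m i \<Longrightarrow> fc i j \<in> Hom C X (Ys i)" using fc_I idl ideal_hom by blast

lemma Ihom: "I A B \<subseteq> Hom C A B" using idl ideal_hom by blast
lemma Jhom: "jac_rad C A B \<subseteq> Hom C A B" using jac_hom by blast

lemma decomp: "x \<in> Hom C Y Z \<Longrightarrow> x = S Y Z idx (\<lambda>a. cmp C (cmp C x (\<iota> a)) (\<pi> a))"
proof -
  assume x: "x \<in> Hom C Y Z"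
  have Z: "Z \<in> Obj C" using x hom_obj by blast
  have "x = cmp C x (S Y Y idx (\<lambda>a. cmp C (\<iota> a) (\<pi> a)))" using bp_sum x by (simp add: hom_iff)
  also have "\<dots> = S Y Z idx (\<lambda>a. cmp C x (cmp C (\<iota> a) (\<pi> a)))"
    using x Yo ip_hom' by (intro cmp_S_right) auto
  also have "\<dots> = S Y Z idx (\<lambda>a. cmp C (cmp C x (\<iota> a)) (\<pi> a))"
  proof (intro S_cong)
    fix a assume a: "a \<in> set idx"
    show "cmp C x (cmp C (\<iota> a) (\<pi> a)) = cmp C (cmp C x (\<iota> a)) (\<pi> a)"
      using x iota_hom'[OF a] pi_hom'[OF a] by (simp add: hom_iff assoc)
  qed
  finally show ?thesis .
qed

lemma decomp_left: "x \<in> Hom C Z Y \<Longrightarrow> x = S Z Y idx (\<lambda>a. cmp C (\<iota> a) (cmp C (\<pi> a) x))"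
proof -
  assume x: "x \<in> Hom C Z Y"
  have Z: "Z \<in> Obj C" using x hom_obj by blast
  have "x = cmp C (S Y Y idx (\<lambda>a. cmp C (\<iota> a) (\<pi> a))) x" using bp_sum x by (simp add: hom_iff)
  also have "\<dots> = S Z Y idx (\<lambda>a. cmp C (cmp C (\<iota> a) (\<pi> a)) x)"
    using x Yo ip_hom' by (intro cmp_S_left) auto
  also have "\<dots> = S Z Y idx (\<lambda>a. cmp C (\<iota> a) (cmp C (\<pi> a) x))"
  proof (intro S_cong)
    fix a assume a: "a \<in> set idx"
    show "cmp C (cmp C (\<iota> a) (\<pi> a)) x = cmp C (\<iota> a) (cmp C (\<pi> a) x)"
      using x iota_hom'[OF a] pi_hom'[OF a] by (simp add: hom_iff assoc)
  qed
  finally show ?thesis .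
qed

lemma f_I: "f \<in> I X Y"
proof -
  have "f = S X Y idx (\<lambda>a. cmp C (\<iota> a) (cmp C (\<pi> a) f))" using decomp_left[OF fh] .
  also have "\<dots> \<in> I X Y"
  proof (intro ideal_S[OF idl Xo Yo])
    fix a assume ha: "a \<in> set idx"
    obtain i j where a': "a = (i, j)" "i < n" "j < m i" using ha by (rule idx_cases)
    show "cmp C (\<iota> a) (cmp C (\<pi> a) f) \<in> I X Y"
      using a' fc_eq fc_I iota_hom idl ideal_cmpL by metis
  qed
  finally show ?thesis .
qed

end

context p1 begin

context
  fixes A0 u assumes la: "left_approx C I X A0 u"
begin

abbreviation P :: "'o \<Rightarrow> 'm \<Rightarrow> bool" where
  "P W \<phi> \<equiv> \<exists>h\<in>Hom C Y W. \<exists>r\<in>jac_rad C A0 W. \<phi> = madd C (cmp C h f) (cmp C r u)"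

lemma uI: "u \<in> I X A0" using la unfolding left_approx_def by (rule conjunct1)
lemma uh: "u \<in> Hom C X A0" using uI Ihom by blast
lemma A0o: "A0 \<in> Obj C" using uh hom_obj by blast
lemma u_fact: "f' \<in> I X A' \<Longrightarrow> \<exists>c\<in>Hom C A0 A'. f' = cmp C c u"
  using la[unfolded left_approx_def, THEN conjunct2, rule_format] .

lemma P_intro: "h \<in> Hom C Y W \<Longrightarrow> r \<in> jac_rad C A0 W \<Longrightarrow> \<phi> = madd C (cmp C h f) (cmp C r u) \<Longrightarrow> P W \<phi>"
  by blast

lemma P_add: "P W \<phi> \<Longrightarrow> P W \<psi> \<Longrightarrow> P W (madd C \<phi> \<psi>)"
proof -
  assume p1: "P W \<phi>" and p2: "P W \<psi>"
  obtain h r where hr: "h \<in> Hom C Y W" "r \<in> jac_rad C A0 W" "\<phi> = madd C (cmp C h f) (cmp C r u)" using p1 by blast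
  obtain h' r' where hr': "h' \<in> Hom C Y W" "r' \<in> jac_rad C A0 W" "\<psi> = madd C (cmp C h' f) (cmp C r' u)" using p2 by blast
  have rh: "r \<in> Hom C A0 W" "r' \<in> Hom C A0 W" using hr hr' jac_hom by auto
  show ?thesis
  proof (rule P_intro)
    show "madd C h h' \<in> Hom C Y W" using hr hr' add_hom by blast
    show "madd C r r' \<in> jac_rad C A0 W" using hr hr' jac_add by blast
    have "madd C \<phi> \<psi> = madd C (madd C (cmp C h f) (cmp C h' f)) (madd C (cmp C r u) (cmp C r' u))"
      unfolding hr(3) hr'(3) using hr hr' rh fh uh by (intro add_swap) (auto simp: hom_iff)
    also have "\<dots> = madd C (cmp C (madd C h h') f) (cmp C (madd C r r') u)"
      using hr hr' rh fh uh by (simp add: hom_iff dist)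
    finally show "madd C \<phi> \<psi> = madd C (cmp C (madd C h h') f) (cmp C (madd C r r') u)" .
  qed
qed

lemma P_left: "P W \<phi> \<Longrightarrow> s \<in> Hom C W W' \<Longrightarrow> P W' (cmp C s \<phi>)"
proof -
  assume p: "P W \<phi>" and s: "s \<in> Hom C W W'"
  obtain h r where hr: "h \<in> Hom C Y W" "r \<in> jac_rad C A0 W" "\<phi> = madd C (cmp C h f) (cmp C r u)" using p by blast
  have rh: "r \<in> Hom C A0 W" using hr jac_hom by auto
  show ?thesis
  proof (rule P_intro)
    show "cmp C s h \<in> Hom C Y W'" using hr s cmp_hom by blast
    show "cmp C s r \<in> jac_rad C A0 W'" using hr s jac_left by blast
    show "cmp C s \<phi> = madd C (cmp C (cmp C s h) f) (cmp C (cmp C s r) u)"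
      unfolding hr(3) using hr rh s fh uh by (simp add: hom_iff dist2 assoc)
  qed
qed

lemma P_zero: "W \<in> Obj C \<Longrightarrow> P W (mzero C X W)"
proof -
  assume W: "W \<in> Obj C"
  show ?thesis
  proof (rule P_intro)
    show "mzero C Y W \<in> Hom C Y W" using W Yo zero_hom by blast
    show "mzero C A0 W \<in> jac_rad C A0 W" using W A0o jac_zero by blast
    show "mzero C X W = madd C (cmp C (mzero C Y W) f) (cmp C (mzero C A0 W) u)"
      using W fh uh Xo by (simp add: hom_iff)
  qed
qed

lemma P_S: "W \<in> Obj C \<Longrightarrow> (\<And>x. x \<in> set xs \<Longrightarrow> P W (F x)) \<Longrightarrow> P W (S X W xs F)"
proof (induction xs)
  case Nil
  then show ?case using P_zero by simp
next
  case (Cons a xs)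
  then show ?case using P_add by simp
qed

lemma P_hom: "P W \<phi> \<Longrightarrow> \<phi> \<in> Hom C X W"
proof -
  assume p: "P W \<phi>"
  obtain h r where hr: "h \<in> Hom C Y W" "r \<in> jac_rad C A0 W" "\<phi> = madd C (cmp C h f) (cmp C r u)" using p by blast
  have rh: "r \<in> Hom C A0 W" using hr jac_hom by auto
  show ?thesis unfolding hr(3) using hr(1) rh fh uh by (meson add_hom cmp_hom)
qed

lemma P_smul: "P W \<phi> \<Longrightarrow> P W (smul C c \<phi>)"
proof -
  assume p: "P W \<phi>"
  have ph: "\<phi> \<in> Hom C X W" using P_hom[OF p] .
  hence W: "W \<in> Obj C" using hom_obj by blast
  have "P W (cmp C (smul C c (idt C W)) \<phi>)" using P_left[OF p] W by (simp add: smul_hom id_hom)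
  thus ?thesis using ph W by (simp add: hom_iff)
qed

lemma P_JI: "\<phi> \<in> JI X W \<Longrightarrow> W \<in> Obj C \<Longrightarrow> P W \<phi>"
proof (induction rule: ideal_prod.induct)
  case ip_zero
  then show ?case using P_zero by simp
next
  case (ip_step b W1 a s)
  obtain c where c: "c \<in> Hom C A0 W1" "b = cmp C c u" using u_fact[OF ip_step(1)] by blast
  have ah: "a \<in> Hom C W1 W" using ip_step jac_hom by blast
  have "P W (cmp C a b)"
  proof (rule P_intro)
    show "mzero C Y W \<in> Hom C Y W" using ip_step Yo zero_hom by blast
    show "cmp C a c \<in> jac_rad C A0 W" using ip_step(2) c jac_right by blast
    show "cmp C a b = madd C (cmp C (mzero C Y W) f) (cmp C (cmp C a c) u)"
      unfolding c(2) using ip_step c ah fh uh Xo by (simp add: hom_iff assoc)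
  qed
  thus ?case using ip_step P_add by blast
qed

lemma P_local: "local_end C W \<Longrightarrow> \<phi> \<in> I X W \<Longrightarrow> P W \<phi>"
proof -
  assume l: "local_end C W" and \<phi>: "\<phi> \<in> I X W"
  have W: "W \<in> Obj C" using l loc_obj by blast
  show ?thesis
  proof (cases "irr_minus_nonzero C I X W")
    case False
    hence "\<phi> \<in> JI X W" using \<phi> unfolding irr_minus_nonzero_def by blast
    thus ?thesis using P_JI W by blast
  next
    case True
    have "indecomposable C W" using local_indec[OF l] .
    then obtain i where i: "i < n" "isomorphic C W (Ys i)" using cond True by blast
    then obtain s where s: "is_iso C W (Ys i) s" unfolding isomorphic_def by blast
    obtain t where t: "t \<in> Hom C (Ys i) W" "cmp C t s = idt C W" using iso_inv[OF s] by blast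
    have sh: "s \<in> Hom C W (Ys i)" using s iso_hom by blast
    have s\<phi>: "cmp C s \<phi> \<in> I X (Ys i)" using \<phi> sh idl ideal_cmpL by blast
    have qb: "quot_basis C X (Ys i) (I X (Ys i)) (JI X (Ys i)) (map (fc i) [0..<m i])"
    proof -
      have "irr_minus_basis C I X (Ys i) (map (fc i) [0..<m i])" using basis i by blast
      thus ?thesis by (simp add: irr_minus_basis_def)
    qed
    obtain cs where cs: "length cs = m i" "msub C (cmp C s \<phi>) (lincomb C X (Ys i) cs (map (fc i) [0..<m i])) \<in> JI X (Ys i)"
      using qb[unfolded quot_basis_def, THEN conjunct2, THEN conjunct2, rule_format, OF s\<phi>] by auto
    define L where "L = lincomb C X (Ys i) cs (map (fc i) [0..<m i])"
    have L: "L = S X (Ys i) [0..<m i] (\<lambda>j. smul C (cs ! j) (fc i j))"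
      unfolding L_def using cs(1) by (subst lincomb_S) (auto intro!: S_cong)
    have PL: "P (Ys i) L"
      unfolding L using Ys_obj[OF i(1)]
    proof (intro P_S P_smul)
      fix j assume "j \<in> set [0..<m i]"
      hence j: "j < m i" by simp
      show "P (Ys i) (fc i j)"
      proof (rule P_intro)
        show "\<pi> (i, j) \<in> Hom C Y (Ys i)" using pi_hom i j by blast
        show "mzero C A0 (Ys i) \<in> jac_rad C A0 (Ys i)" using A0o Ys_obj i jac_zero by blast
        show "fc i j = madd C (cmp C (\<pi> (i, j)) f) (cmp C (mzero C A0 (Ys i)) u)"
          using fc_eq[OF i(1) j] fc_hom[OF i(1) j] uh Ys_obj[OF i(1)] by (simp add: hom_iff)
      qed
    qed
    have \<rho>: "P (Ys i) (msub C (cmp C s \<phi>) L)" using cs(2) L_def P_JI Ys_obj i by blast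
    have Lh: "L \<in> Hom C X (Ys i)" using P_hom[OF PL] .
    have s\<phi>h: "cmp C s \<phi> \<in> Hom C X (Ys i)" using s\<phi> Ihom by blast
    have "cmp C s \<phi> = madd C L (msub C (cmp C s \<phi>) L)"
      using Lh s\<phi>h by (subst sub_eq_iff[symmetric]) (auto simp: hom_iff)
    hence "P (Ys i) (cmp C s \<phi>)" using P_add[OF PL \<rho>] by simp
    hence "P W (cmp C t (cmp C s \<phi>))" using P_left t by blast
    moreover have "cmp C t (cmp C s \<phi>) = \<phi>"
    proof -
      have \<phi>h: "\<phi> \<in> Hom C X W" using \<phi> Ihom by blast
      have "cmp C t (cmp C s \<phi>) = cmp C (cmp C t s) \<phi>" using t(1) sh \<phi>h by (simp add: hom_iff assoc)
      thus ?thesis using t(2) \<phi>h by (simp add: hom_iff)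
    qed
    ultimately show ?thesis by simp
  qed
qed

lemma P_all: "W \<in> Obj C \<Longrightarrow> \<phi> \<in> I X W \<Longrightarrow> P W \<phi>"
proof -
  assume W: "W \<in> Obj C" and \<phi>: "\<phi> \<in> I X W"
  obtain As and \<iota>' \<pi>' :: "nat \<Rightarrow> 'm" where loc: "\<forall>A\<in>set As. local_end C A"
    and b: "is_biproduct C [0..<length As] (\<lambda>i. As ! i) W \<iota>' \<pi>'"
    using ks W unfolding krull_schmidt_def by blast
  note bp = bp_parts[OF b]
  have \<phi>h: "\<phi> \<in> Hom C X W" using \<phi> Ihom by blast
  have hh: "\<And>k. k < length As \<Longrightarrow> cmp C (\<iota>' k) (\<pi>' k) \<in> Hom C W W" using bp(4,5) cmp_hom by fastforce
  have "\<phi> = cmp C (S W W [0..<length As] (\<lambda>k. cmp C (\<iota>' k) (\<pi>' k))) \<phi>" using bp(7) \<phi>h by (simp add: hom_iff)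
  also have "\<dots> = S X W [0..<length As] (\<lambda>k. cmp C (cmp C (\<iota>' k) (\<pi>' k)) \<phi>)"
    using \<phi>h W hh by (intro cmp_S_left) auto
  also have "\<dots> = S X W [0..<length As] (\<lambda>k. cmp C (\<iota>' k) (cmp C (\<pi>' k) \<phi>))"
  proof (intro S_cong)
    fix k assume "k \<in> set [0..<length As]"
    hence k: "k < length As" by simp
    show "cmp C (cmp C (\<iota>' k) (\<pi>' k)) \<phi> = cmp C (\<iota>' k) (cmp C (\<pi>' k) \<phi>)"
      using bp(4)[of k] bp(5)[of k] k \<phi>h by (simp add: hom_iff assoc)
  qed
  finally have e: "\<phi> = S X W [0..<length As] (\<lambda>k. cmp C (\<iota>' k) (cmp C (\<pi>' k) \<phi>))" .
  have "P W (S X W [0..<length As] (\<lambda>k. cmp C (\<iota>' k) (cmp C (\<pi>' k) \<phi>)))"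
  proof (rule P_S[OF W])
    fix k assume "k \<in> set [0..<length As]"
    hence k: "k < length As" by simp
    have "cmp C (\<pi>' k) \<phi> \<in> I X (As ! k)" using bp(5)[of k] k \<phi> idl ideal_cmpL by simp
    hence "P (As ! k) (cmp C (\<pi>' k) \<phi>)" using P_local loc k by simp
    thus "P W (cmp C (\<iota>' k) (cmp C (\<pi>' k) \<phi>))" using P_left bp(4)[of k] k by simp
  qed
  thus ?thesis using e by simp
qed

lemma u_through_f: "\<exists>w\<in>Hom C Y A0. u = cmp C w f"
proof -
  obtain h r where hr: "h \<in> Hom C Y A0" "r \<in> jac_rad C A0 A0" "u = madd C (cmp C h f) (cmp C r u)"
    using P_all[OF A0o uI] by blast
  have rh: "r \<in> Hom C A0 A0" using hr jac_hom by blast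
  have iso: "is_iso C A0 A0 (msub C (idt C A0) r)"
    using hr(2) A0o id_hom jac_iff rh by (metis id_left homD)
  obtain v where v: "v \<in> Hom C A0 A0" "cmp C v (msub C (idt C A0) r) = idt C A0" using iso is_iso_def by metis
  have "cmp C (msub C (idt C A0) r) u = msub C u (cmp C r u)" using rh uh A0o by (simp add: hom_iff cmp_sub_left)
  also have "\<dots> = cmp C h f"
    using hr rh uh fh by (subst sub_eq_iff) (auto simp: hom_iff add_comm)
  finally have e: "cmp C (msub C (idt C A0) r) u = cmp C h f" .
  have "u = cmp C (cmp C v (msub C (idt C A0) r)) u" using v uh by (simp add: hom_iff)
  also have "\<dots> = cmp C v (cmp C (msub C (idt C A0) r) u)" using v(1) rh uh A0o by (simp add: hom_iff assoc)
  also have "\<dots> = cmp C (cmp C v h) f" unfolding e using v hr fh by (simp add: hom_iff assoc)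
  finally show ?thesis using v hr cmp_hom by blast
qed

end

lemma f_approx: "left_approx C I X Y f"
proof -
  obtain A0 u where la: "left_approx C I X A0 u" using ffl Xo by blast
  obtain w where w: "w \<in> Hom C Y A0" "u = cmp C w f" using u_through_f[OF la] by blast
  have "\<exists>h\<in>Hom C Y A'. f' = cmp C h f" if f': "f' \<in> I X A'" for A' f'
  proof -
    obtain c where c: "c \<in> Hom C A0 A'" "f' = cmp C c u" using u_fact[OF la f'] by blast
    have "f' = cmp C (cmp C c w) f" using c w fh by (simp add: hom_iff assoc)
    thus ?thesis using c w cmp_hom by blast
  qed
  thus ?thesis unfolding left_approx_def using f_I by blast
qed

end


context kc begin
lemma smul_diff: "arr x \<Longrightarrow> smul C (a - b) x = msub C (smul C a x) (smul C b x)"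
proof -
  assume x: "arr x"
  have "smul C (a - b) x = smul C (a + (- 1) * b) x" by simp
  also have "\<dots> = madd C (smul C a x) (smul C ((- 1) * b) x)" using x by (rule add_smul)
  also have "smul C ((- 1) * b) x = mneg C (smul C b x)" using x by (simp add: mneg_def)
  finally show ?thesis by (simp add: msub_def)
qed

lemma S_lin_sub: "X \<in> Obj C \<Longrightarrow> Y \<in> Obj C \<Longrightarrow> (\<And>x. x \<in> set xs \<Longrightarrow> F x \<in> Hom C X Y) \<Longrightarrow>
  S X Y xs (\<lambda>x. smul C (a x - b x) (F x)) = msub C (S X Y xs (\<lambda>x. smul C (a x) (F x))) (S X Y xs (\<lambda>x. smul C (b x) (F x)))"
proof (induction xs)
  case Nil
  then show ?case by simp
next
  case (Cons y xs)
  have h: "F y \<in> Hom C X Y" using Cons by simp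
  have hs: "S X Y xs (\<lambda>x. smul C (a x) (F x)) \<in> Hom C X Y" "S X Y xs (\<lambda>x. smul C (b x) (F x)) \<in> Hom C X Y"
    using Cons by (auto intro!: S_hom smul_hom)
  have "S X Y (y # xs) (\<lambda>x. smul C (a x - b x) (F x)) =
     madd C (msub C (smul C (a y) (F y)) (smul C (b y) (F y))) (msub C (S X Y xs (\<lambda>x. smul C (a x) (F x))) (S X Y xs (\<lambda>x. smul C (b x) (F x))))"
    using Cons h by (simp add: smul_diff hom_iff)
  also have "\<dots> = msub C (madd C (smul C (a y) (F y)) (S X Y xs (\<lambda>x. smul C (a x) (F x)))) (madd C (smul C (b y) (F y)) (S X Y xs (\<lambda>x. smul C (b x) (F x))))"
    unfolding msub_def using h hs by (subst neg_add) (auto simp: hom_iff intro!: add_swap)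
  finally show ?case by simp
qed
end

context p1 begin

lemma row:
  assumes i: "i < n" and j: "j < m i" and g: "g \<in> Hom C Y Y" and gf: "cmp C g f = f"
    and i': "i' < n" and j': "j' < m i'"
  shows "msub C (cmp C (\<pi> (i, j)) (cmp C g (\<iota> (i', j')))) (cmp C (\<pi> (i, j)) (\<iota> (i', j'))) \<in> jac_rad C (Ys i') (Ys i)"
proof -
  define G where "G = (\<lambda>b. cmp C (\<pi> (i, j)) (cmp C g (\<iota> b)))"
  have Yi: "Ys i \<in> Obj C" using Ys_obj i by blast
  have pa: "\<pi> (i, j) \<in> Hom C Y (Ys i)" using pi_hom i j by blast
  have Gh: "G b \<in> Hom C (Ys (fst b)) (Ys i)" if b: "b \<in> set idx" for b
    unfolding G_def using iota_hom'[OF b] g pa by (meson cmp_hom)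
  have Gjac_off: "G b \<in> jac_rad C (Ys (fst b)) (Ys i)" if b: "b \<in> set idx" "fst b \<noteq> i" for b
  proof -
    have fb: "fst b < n" by (rule idx_cases[OF b(1)]) simp
    have "\<not> isomorphic C (Ys (fst b)) (Ys i)" using noniso fb i b(2) by blast
    thus ?thesis using loc_hom_jac[OF Ys_loc[OF i] Ys_loc[OF fb]] Gh[OF b(1)] by blast
  qed
  define lam where "lam = (\<lambda>b. SOME x. msub C (G b) (smul C x (idt C (Ys i))) \<in> jac_rad C (Ys i) (Ys i))"
  have lam: "msub C (G b) (smul C (lam b) (idt C (Ys i))) \<in> jac_rad C (Ys i) (Ys i)" if b: "b \<in> set idx" "fst b = i" for b
  proof -
    have "\<exists>x. msub C (G b) (smul C x (idt C (Ys i))) \<in> jac_rad C (Ys i) (Ys i)"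
      using eigen[OF ac hf Ys_loc[OF i]] Gh[OF b(1)] b(2) by simp
    thus ?thesis unfolding lam_def by (rule someI_ex)
  qed
  define R where "R = (\<lambda>b. if fst b = i then msub C (G b) (smul C (lam b) (idt C (Ys i))) else G b)"
  have Rj: "R b \<in> jac_rad C (Ys (fst b)) (Ys i)" if b: "b \<in> set idx" for b
    using lam[OF b] Gjac_off[OF b] unfolding R_def by (cases "fst b = i") auto
  have Rh: "R b \<in> Hom C (Ys (fst b)) (Ys i)" if b: "b \<in> set idx" for b using Rj[OF b] jac_hom by blast
  define fb where "fb = (\<lambda>b. cmp C (\<pi> b) f)"
  have fbh: "fb b \<in> Hom C X (Ys (fst b))" if b: "b \<in> set idx" for b
    unfolding fb_def using pi_hom'[OF b] fh cmp_hom by blast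
  have fbI: "fb b \<in> I X (Ys (fst b))" if b: "b \<in> set idx" for b
    unfolding fb_def using pi_hom'[OF b] f_I idl ideal_cmpL by blast
  define T where "T = (\<lambda>b. if fst b = i then smul C (lam b) (fb b) else mzero C X (Ys i))"
  have Th: "T b \<in> Hom C X (Ys i)" if b: "b \<in> set idx" for b
    unfolding T_def using fbh[OF b] Xo Yi by (auto intro: smul_hom zero_hom)
  have GT: "cmp C (G b) (fb b) = madd C (T b) (cmp C (R b) (fb b))" if b: "b \<in> set idx" for b
  proof (cases "fst b = i")
    case True
    have "G b = madd C (smul C (lam b) (idt C (Ys i))) (R b)"
      using True Gh[OF b] Yi unfolding R_def by (subst sub_eq_iff[symmetric]) (auto simp: hom_iff)
    hence "cmp C (G b) (fb b) = madd C (cmp C (smul C (lam b) (idt C (Ys i))) (fb b)) (cmp C (R b) (fb b))"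
      using True Rh[OF b] fbh[OF b] Yi by (simp add: hom_iff dist)
    thus ?thesis using True fbh[OF b] Yi unfolding T_def by (simp add: hom_iff)
  next
    case False
    thus ?thesis using Rh[OF b] fbh[OF b] Yi Xo unfolding T_def R_def by (simp add: hom_iff)
  qed
  have "fc i j = cmp C (\<pi> (i, j)) (cmp C g f)" using fc_eq[OF i j] gf by simp
  also have "\<dots> = cmp C (cmp C (\<pi> (i, j)) g) (S X Y idx (\<lambda>b. cmp C (\<iota> b) (fb b)))"
    using decomp_left[OF fh] pa g fh unfolding fb_def by (simp add: hom_iff assoc)
  also have "\<dots> = S X (Ys i) idx (\<lambda>b. cmp C (cmp C (\<pi> (i, j)) g) (cmp C (\<iota> b) (fb b)))"
  proof (rule cmp_S_right[OF cmp_hom[OF g pa] Xo])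
    fix b assume b: "b \<in> set idx"
    show "cmp C (\<iota> b) (fb b) \<in> Hom C X Y" using iota_hom'[OF b] fbh[OF b] cmp_hom by blast
  qed
  also have "\<dots> = S X (Ys i) idx (\<lambda>b. madd C (T b) (cmp C (R b) (fb b)))"
  proof (intro S_cong)
    fix b assume b: "b \<in> set idx"
    have "cmp C (cmp C (\<pi> (i, j)) g) (cmp C (\<iota> b) (fb b)) = cmp C (G b) (fb b)"
      unfolding G_def using pa g iota_hom'[OF b] fbh[OF b] by (simp add: hom_iff assoc)
    thus "cmp C (cmp C (\<pi> (i, j)) g) (cmp C (\<iota> b) (fb b)) = madd C (T b) (cmp C (R b) (fb b))" using GT[OF b] by simp
  qed
  also have "\<dots> = madd C (S X (Ys i) idx T) (S X (Ys i) idx (\<lambda>b. cmp C (R b) (fb b)))"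
  proof (rule S_add[OF Xo Yi])
    fix b assume b: "b \<in> set idx"
    show "T b \<in> Hom C X (Ys i)" using Th[OF b] .
    show "cmp C (R b) (fb b) \<in> Hom C X (Ys i)" using Rh[OF b] fbh[OF b] cmp_hom by blast
  qed
  finally have fcij: "fc i j = madd C (S X (Ys i) idx T) (S X (Ys i) idx (\<lambda>b. cmp C (R b) (fb b)))" .
  have \<rho>: "S X (Ys i) idx (\<lambda>b. cmp C (R b) (fb b)) \<in> JI X (Ys i)"
  proof (rule ip_S[OF Jhom Ihom Xo Yi])
    fix b assume b: "b \<in> set idx"
    show "cmp C (R b) (fb b) \<in> JI X (Ys i)" by (rule ip_single[OF Jhom Ihom Xo Yi fbI[OF b] Rj[OF b]])
  qed
  define L where "L = S X (Ys i) [0..<m i] (\<lambda>j'. smul C (lam (i, j')) (fc i j'))"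
  have ST: "S X (Ys i) idx T = L"
  proof -
    have "S X (Ys i) idx T = S X (Ys i) [0..<n] (\<lambda>i'. S X (Ys i) (map (\<lambda>j'. (i', j')) [0..<m i']) T)"
      unfolding bp_index_def using Xo Yi Th by (intro S_concat) (auto simp: bp_index_def)
    also have "\<dots> = S X (Ys i) (map (\<lambda>j'. (i, j')) [0..<m i]) T"
    proof (rule S_single[of _ _ _ i])
      show "S X (Ys i) (map (\<lambda>j'. (i', j')) [0..<m i']) T \<in> Hom C X (Ys i)" if "i' \<in> set [0..<n]" for i'
        using that Xo Yi Th idx_mem by (intro S_hom) auto
      show "S X (Ys i) (map (\<lambda>j'. (i', j')) [0..<m i']) T = mzero C X (Ys i)" if "i' \<in> set [0..<n]" "i' \<noteq> i" for i'
        using that Xo Yi unfolding T_def by (intro S_zero) auto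
    qed (use Xo Yi i in auto)
    also have "\<dots> = L" unfolding L_def S_map T_def fb_def using fc_eq[OF i] by (intro S_cong) auto
    finally show ?thesis .
  qed
  define cs where "cs = map (\<lambda>j'. (if j' = j then 1 else 0) - lam (i, j')) [0..<m i]"
  have fch: "\<And>j'. j' < m i \<Longrightarrow> fc i j' \<in> Hom C X (Ys i)" using fc_hom i by blast
  have "lincomb C X (Ys i) cs (map (fc i) [0..<m i]) = S X (Ys i) [0..<m i] (\<lambda>j'. smul C ((if j' = j then 1 else 0) - lam (i, j')) (fc i j'))"
    unfolding cs_def by (subst lincomb_S) (auto intro!: S_cong)
  also have "\<dots> = msub C (S X (Ys i) [0..<m i] (\<lambda>j'. smul C (if j' = j then 1 else 0) (fc i j'))) L"
    unfolding L_def using Xo Yi fch by (intro S_lin_sub) auto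
  also have "S X (Ys i) [0..<m i] (\<lambda>j'. smul C (if j' = j then 1 else 0) (fc i j')) = fc i j"
    using Xo Yi fch j by (subst S_single[of _ _ _ j]) (auto simp: hom_iff intro: smul_hom)
  also have "msub C (fc i j) L = S X (Ys i) idx (\<lambda>b. cmp C (R b) (fb b))"
  proof -
    have Lh: "L \<in> Hom C X (Ys i)" using ST Th Xo Yi S_hom by metis
    have "S X (Ys i) idx (\<lambda>b. cmp C (R b) (fb b)) \<in> Hom C X (Ys i)" using \<rho> ip_hom[OF _ Jhom Ihom] Xo Yi by blast
    thus ?thesis using fcij ST Lh fch[OF j] by (subst sub_eq_iff) (auto simp: hom_iff)
  qed
  finally have "lincomb C X (Ys i) cs (map (fc i) [0..<m i]) \<in> JI X (Ys i)" using \<rho> by simp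
  moreover have qb: "quot_basis C X (Ys i) (I X (Ys i)) (JI X (Ys i)) (map (fc i) [0..<m i])"
  proof -
    have "irr_minus_basis C I X (Ys i) (map (fc i) [0..<m i])" using basis i by blast
    thus ?thesis by (simp add: irr_minus_basis_def)
  qed
  ultimately have cz: "\<forall>c\<in>set cs. c = 0"
    using qb[unfolded quot_basis_def, THEN conjunct2, THEN conjunct1, rule_format, of cs] cs_def by simp
  have lamv: "lam (i, j'') = (if j'' = j then 1 else 0)" if "j'' < m i" for j''
    using cz that unfolding cs_def by auto
  have b: "(i', j') \<in> set idx" using i' j' idx_mem by simp
  show ?thesis
  proof (cases "i' = i")
    case True
    have "msub C (cmp C (\<pi> (i, j)) (cmp C g (\<iota> (i', j')))) (cmp C (\<pi> (i, j)) (\<iota> (i', j'))) = R (i', j')"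
      unfolding R_def G_def using True lamv[of j'] j' pi_iota[OF i j i' j'] Yi by auto
    thus ?thesis using Rj[OF b] True by simp
  next
    case False
    have "msub C (cmp C (\<pi> (i, j)) (cmp C g (\<iota> (i', j')))) (cmp C (\<pi> (i, j)) (\<iota> (i', j'))) = G (i', j')"
      unfolding G_def using False pi_iota[OF i j i' j'] Gh[OF b] Yi Ys_obj[OF i'] by (simp add: hom_iff G_def)
    thus ?thesis using Gjac_off[OF b] False by simp
  qed
qed

lemma f_minimal: "left_minimal C X Y f"
  unfolding left_minimal_def
proof (intro conjI ballI impI)
  show "f \<in> Hom C X Y" by (rule fh)
  fix g assume g: "g \<in> Hom C Y Y" and gf: "cmp C g f = f"
  define x where "x = msub C g (idt C Y)"
  have xh: "x \<in> Hom C Y Y" unfolding x_def using g Yo by (simp add: hom_iff)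
  have col: "cmp C x (\<iota> b) \<in> jac_rad C (Ys (fst b)) Y" if b: "b \<in> set idx" for b
  proof -
    have xi: "cmp C x (\<iota> b) \<in> Hom C (Ys (fst b)) Y" using xh iota_hom'[OF b] cmp_hom by blast
    have "cmp C x (\<iota> b) = S (Ys (fst b)) Y idx (\<lambda>a. cmp C (\<iota> a) (cmp C (\<pi> a) (cmp C x (\<iota> b))))"
      using decomp_left[OF xi] .
    also have "\<dots> \<in> jac_rad C (Ys (fst b)) Y"
    proof (intro jac_S)
      show "Ys (fst b) \<in> Obj C" using xi hom_obj by blast
      show "Y \<in> Obj C" by (rule Yo)
      fix a assume a: "a \<in> set idx"
      obtain i j where a': "a = (i, j)" "i < n" "j < m i" using a by (rule idx_cases)
      obtain i' j' where b': "b = (i', j')" "i' < n" "j' < m i'" using b by (rule idx_cases)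
      have "cmp C (\<pi> a) (cmp C x (\<iota> b)) = msub C (cmp C (\<pi> (i, j)) (cmp C g (\<iota> (i', j')))) (cmp C (\<pi> (i, j)) (\<iota> (i', j')))"
        unfolding x_def a'(1) b'(1) using g Yo pi_hom[OF a'(2,3)] iota_hom[OF b'(2,3)]
        by (simp add: hom_iff cmp_sub_left cmp_sub_right)
      also have "\<dots> \<in> jac_rad C (Ys i') (Ys i)" using row[OF a'(2,3) g gf b'(2,3)] .
      finally show "cmp C (\<iota> a) (cmp C (\<pi> a) (cmp C x (\<iota> b))) \<in> jac_rad C (Ys (fst b)) Y"
        using jac_left iota_hom'[OF a] a'(1) b'(1) by simp
    qed
    finally show ?thesis .
  qed
  have "x = S Y Y idx (\<lambda>b. cmp C (cmp C x (\<iota> b)) (\<pi> b))" using decomp[OF xh] .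
  also have "\<dots> \<in> jac_rad C Y Y"
  proof (rule jac_S[OF Yo Yo])
    fix b assume b: "b \<in> set idx"
    show "cmp C (cmp C x (\<iota> b)) (\<pi> b) \<in> jac_rad C Y Y" by (rule jac_right[OF col[OF b] pi_hom'[OF b]])
  qed
  finally have xj: "x \<in> jac_rad C Y Y" .
  have "g = madd C (idt C Y) x" unfolding x_def using g Yo by (subst add_sub_cancel) (auto simp: hom_iff)
  thus "is_iso C Y Y g" using jac_one_plus[OF xj] by simp
qed

lemma part1: "source_map C I X Y f"
  unfolding source_map_def using f_approx f_minimal by blast

end


definition opc :: "('o, 'm, 'k) kcat \<Rightarrow> ('o, 'm, 'k) kcat" where
  "opc C = C\<lparr>Hom := (\<lambda>X Y. Hom C Y X), cmp := (\<lambda>a b. cmp C b a), mzero := (\<lambda>X Y. mzero C Y X)\<rparr>"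

lemma opc_simps[simp]: "Obj (opc C) = Obj C" "Hom (opc C) X Y = Hom C Y X" "cmp (opc C) a b = cmp C b a"
  "idt (opc C) = idt C" "madd (opc C) = madd C" "mzero (opc C) X Y = mzero C Y X" "smul (opc C) = smul C"
  by (simp_all add: opc_def)

lemma opc_mneg[simp]: "mneg (opc C) = mneg C" by (simp add: mneg_def fun_eq_iff)
lemma opc_msub[simp]: "msub (opc C) = msub C" by (simp add: msub_def fun_eq_iff)
lemma opc_lsum[simp]: "lsum (opc C) X Y = lsum C Y X" by (simp add: lsum_def fun_eq_iff)
lemma opc_lincomb[simp]: "lincomb (opc C) X Y = lincomb C Y X" by (simp add: lincomb_def fun_eq_iff)
lemma opc_is_iso[simp]: "is_iso (opc C) X Y f = is_iso C Y X f" by (auto simp: is_iso_def)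
lemma opc_isomorphic[simp]: "isomorphic (opc C) X Y = isomorphic C Y X" by (simp add: isomorphic_def)
lemma opc_zero_obj[simp]: "is_zero_obj (opc C) N = is_zero_obj C N" by (simp add: is_zero_obj_def)
lemma opc_bp[simp]: "is_biproduct (opc C) idx A Y \<iota> \<pi> = is_biproduct C idx A Y \<pi> \<iota>"
  unfolding is_biproduct_def by auto
lemma opc_indec[simp]: "indecomposable (opc C) X = indecomposable C X"
  unfolding indecomposable_def by auto
lemma opc_local[simp]: "local_end (opc C) X = local_end C X"
  unfolding local_end_def by simp
lemma opc_bp_ex: "(\<exists>Y (\<iota>::'i \<Rightarrow> 'm) \<pi>. is_biproduct (opc C) idx A Y \<iota> \<pi>) = (\<exists>Y (\<iota>::'i \<Rightarrow> 'm) \<pi>. is_biproduct C idx A Y \<iota> \<pi>)"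
  by (simp only: opc_bp) blast
lemma opc_additive[simp]: "additive (opc C) = additive C"
  unfolding additive_def opc_simps opc_bp_ex ..
lemma opc_ks[simp]: "krull_schmidt (opc C) = krull_schmidt C"
proof -
  have "(\<exists>As (\<iota>::nat \<Rightarrow> 'b) \<pi>. (\<forall>A\<in>set As. local_end C A) \<and> is_biproduct (opc C) [0..<length As] ((!) As) X \<iota> \<pi>) =
        (\<exists>As (\<iota>::nat \<Rightarrow> 'b) \<pi>. (\<forall>A\<in>set As. local_end C A) \<and> is_biproduct C [0..<length As] ((!) As) X \<iota> \<pi>)" for X
    by (simp only: opc_bp) blast
  thus ?thesis unfolding krull_schmidt_def opc_additive opc_local opc_simps by simp
qed
lemma opc_hf[simp]: "hom_finite (opc C) = hom_finite C"
  unfolding hom_finite_def by auto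
lemma opc_quot_basis[simp]: "quot_basis (opc C) X Y V N fs = quot_basis C Y X V N fs"
  unfolding quot_basis_def by simp

lemma opc_left_approx[simp]: "left_approx (opc C) (\<lambda>X Y. I Y X) X A f = right_approx C I A X f"
  unfolding left_approx_def right_approx_def by simp
lemma opc_left_minimal[simp]: "left_minimal (opc C) X Y f = right_minimal C Y X f"
  unfolding left_minimal_def right_minimal_def by simp
lemma opc_source[simp]: "source_map (opc C) (\<lambda>X Y. I Y X) X Y f = sink_map C I Y X f"
  unfolding source_map_def sink_map_def by simp

lemma opc_ideal_prod: "ideal_prod (opc C) (\<lambda>X Y. A Y X) (\<lambda>X Y. B Y X) X Y = ideal_prod C B A Y X"
proof (intro set_eqI iffI)
  fix x assume "x \<in> ideal_prod (opc C) (\<lambda>X Y. A Y X) (\<lambda>X Y. B Y X) X Y"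
  thus "x \<in> ideal_prod C B A Y X"
  proof (induction rule: ideal_prod.induct)
    case ip_zero
    then show ?case by (simp add: ideal_prod.ip_zero)
  next
    case (ip_step b W a s)
    then show ?case by (auto intro: ideal_prod.ip_step)
  qed
next
  fix x assume "x \<in> ideal_prod C B A Y X"
  thus "x \<in> ideal_prod (opc C) (\<lambda>X Y. A Y X) (\<lambda>X Y. B Y X) X Y"
  proof (induction rule: ideal_prod.induct)
    case ip_zero
    then show ?case using ideal_prod.ip_zero[where C="opc C" and X=X and Y=Y and A="\<lambda>X Y. A Y X" and B="\<lambda>X Y. B Y X"] by simp
  next
    case (ip_step b W a s)
    then show ?case using ideal_prod.ip_step[where C="opc C" and X=X and Y=Y and A="\<lambda>X Y. A Y X" and B="\<lambda>X Y. B Y X" and b=a and a=b and W=W] by simp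
  qed
qed

context kc begin

lemma opc_kl: "k_linear_cat (opc C)"
  unfolding k_linear_cat_def opc_simps opc_mneg
  apply (intro conjI)
  subgoal using hom_obj by blast
  subgoal using hom_uniq by blast
  subgoal using id_hom by blast
  subgoal using cmp_hom by blast
  subgoal by (simp add: hom_iff assoc)
  subgoal by (simp add: hom_iff)
  subgoal
    apply (intro ballI conjI allI impI)
    apply (simp_all add: hom_iff add_neg smul_add add_smul)
    apply (simp_all add: add_assoc)
    apply (simp_all add: add_comm)
    done
  subgoal by (simp add: hom_iff dist2)
  subgoal by (simp add: hom_iff dist)
  done

lemma opc_jac: "jac_rad (opc C) X Y = jac_rad C Y X"
proof (intro set_eqI iffI)
  fix f assume f: "f \<in> jac_rad (opc C) X Y"
  have fh: "f \<in> Hom C Y X" using f by (simp add: jac_rad_def)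
  show "f \<in> jac_rad C Y X" unfolding jac_iff
  proof (intro conjI ballI)
    show "f \<in> Hom C Y X" by fact
    fix g assume g: "g \<in> Hom C X Y"
    have "is_iso C X X (msub C (idt C X) (cmp C f g))" using f g by (simp add: jac_rad_def)
    thus "is_iso C Y Y (msub C (idt C Y) (cmp C g f))" using ab_lemma[OF g fh] by blast
  qed
next
  fix f assume f: "f \<in> jac_rad C Y X"
  have fh: "f \<in> Hom C Y X" using f jac_hom by blast
  show "f \<in> jac_rad (opc C) X Y" unfolding jac_rad_def
  proof (simp, intro conjI ballI)
    show "f \<in> Hom C Y X" by fact
    fix g assume g: "g \<in> Hom C X Y"
    have "is_iso C Y Y (msub C (idt C Y) (cmp C g f))" using f g jac_iff by blast
    thus "is_iso C X X (msub C (idt C X) (cmp C f g))" using ab_lemma[OF fh g] by blast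
  qed
qed

lemma opc_jac_fun: "jac_rad (opc C) = (\<lambda>X Y. jac_rad C Y X)"
  using opc_jac by (simp add: fun_eq_iff)

lemma opc_irr_minus_basis: "irr_minus_basis (opc C) (\<lambda>X Y. I Y X) X Y fs = irr_plus_basis C I Y X fs"
  unfolding irr_minus_basis_def irr_plus_basis_def opc_jac_fun opc_ideal_prod by simp

lemma opc_irr_minus_nonzero: "irr_minus_nonzero (opc C) (\<lambda>X Y. I Y X) X Y = irr_plus_nonzero C I Y X"
  unfolding irr_minus_nonzero_def irr_plus_nonzero_def opc_jac_fun opc_ideal_prod by simp

lemma opc_ideal: "is_ideal C I \<Longrightarrow> is_ideal (opc C) (\<lambda>X Y. I Y X)"
  unfolding is_ideal_def by (simp add: mneg_def)

lemma isomorphic_sym: "isomorphic C X Y \<Longrightarrow> isomorphic C Y X"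
  unfolding isomorphic_def using iso_inv by blast

end


theorem proposition4p9:
  fixes C :: "('o, 'm, 'k::field) kcat"
    and sh :: "'o \<Rightarrow> 'o" and shm :: "'m \<Rightarrow> 'm"
    and \<Delta> :: "('o \<times> 'o \<times> 'o \<times> 'm \<times> 'm \<times> 'm) set"
    and I :: "'o \<Rightarrow> 'o \<Rightarrow> 'm set"
    and X Z Y :: 'o and n :: nat and m :: "nat \<Rightarrow> nat" and Ys :: "nat \<Rightarrow> 'o"
    and \<iota> \<pi> :: "nat \<times> nat \<Rightarrow> 'm"
    and f g :: 'm and fc gc :: "nat \<Rightarrow> nat \<Rightarrow> 'm"
  assumes "alg_closed TYPE('k)"
    and "triangulated C sh shm \<Delta>"
    and "hom_finite C"
    and "krull_schmidt C"
    and "is_ideal C I"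
    and "functorially_finite C I"
    and "indecomposable C X"
    and "indecomposable C Z"
    and "\<forall>i<n. indecomposable C (Ys i)"
    and "\<forall>i<n. \<forall>j<n. i \<noteq> j \<longrightarrow> \<not> isomorphic C (Ys i) (Ys j)"
    and "is_biproduct C (bp_index n m) (\<lambda>(i, j). Ys i) Y \<iota> \<pi>"
  shows "(f \<in> Hom C X Y \<and>
          (\<forall>i<n. \<forall>j<m i. cmp C (\<pi> (i, j)) f = fc i j \<and> fc i j \<in> I X (Ys i)) \<and>
          (\<forall>i<n. irr_minus_basis C I X (Ys i) (map (fc i) [0..<m i])) \<and>
          (\<forall>Y'. indecomposable C Y' \<and> irr_minus_nonzero C I X Y' \<longrightarrow>
                 (\<exists>i<n. isomorphic C Y' (Ys i)))
          \<longrightarrow> source_map C I X Y f)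
       \<and>
         (g \<in> Hom C Y Z \<and>
          (\<forall>i<n. \<forall>j<m i. cmp C g (\<iota> (i, j)) = gc i j \<and> gc i j \<in> I (Ys i) Z) \<and>
          (\<forall>i<n. irr_plus_basis C I (Ys i) Z (map (gc i) [0..<m i])) \<and>
          (\<forall>Y'. indecomposable C Y' \<and> irr_plus_nonzero C I Y' Z \<longrightarrow>
                 (\<exists>i<n. isomorphic C Y' (Ys i)))
          \<longrightarrow> sink_map C I Y Z g)"
proof -
  note a = assms
  have kl: "k_linear_cat C" using a(2) unfolding triangulated_def by (rule conjunct1)
  interpret kc C by (rule kc.intro[OF kl])
  have ffl: "\<forall>X\<in>Obj C. \<exists>A f. left_approx C I X A f" using a(6) unfolding functorially_finite_def by blast
  have ffr: "\<forall>X\<in>Obj C. \<exists>A g. right_approx C I A X g" using a(6) unfolding functorially_finite_def by blast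
  have Xo: "X \<in> Obj C" using a(7) by (simp add: indecomposable_def)
  have Zo: "Z \<in> Obj C" using a(8) by (simp add: indecomposable_def)
  show ?thesis
  proof (intro conjI impI)
    assume h: "f \<in> Hom C X Y \<and>
          (\<forall>i<n. \<forall>j<m i. cmp C (\<pi> (i, j)) f = fc i j \<and> fc i j \<in> I X (Ys i)) \<and>
          (\<forall>i<n. irr_minus_basis C I X (Ys i) (map (fc i) [0..<m i])) \<and>
          (\<forall>Y'. indecomposable C Y' \<and> irr_minus_nonzero C I X Y' \<longrightarrow>
                 (\<exists>i<n. isomorphic C Y' (Ys i)))"
    interpret P: p1 C I X Y n m Ys \<iota> \<pi> f fc
      by (rule p1.intro[OF kc_axioms], rule p1_axioms.intro) (use a h ffl Xo in auto)
    show "source_map C I X Y f" by (rule P.part1)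
  next
    assume h: "g \<in> Hom C Y Z \<and>
          (\<forall>i<n. \<forall>j<m i. cmp C g (\<iota> (i, j)) = gc i j \<and> gc i j \<in> I (Ys i) Z) \<and>
          (\<forall>i<n. irr_plus_basis C I (Ys i) Z (map (gc i) [0..<m i])) \<and>
          (\<forall>Y'. indecomposable C Y' \<and> irr_plus_nonzero C I Y' Z \<longrightarrow>
                 (\<exists>i<n. isomorphic C Y' (Ys i)))"
    have kco: "kc (opc C)" by (rule kc.intro[OF opc_kl])
    have i1: "\<forall>X\<in>Obj (opc C). \<exists>A f. left_approx (opc C) (\<lambda>X Y. I Y X) X A f" using ffr by simp
    have i2: "\<forall>i<n. \<forall>j<n. i \<noteq> j \<longrightarrow> \<not> isomorphic (opc C) (Ys i) (Ys j)" using a(10) by auto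
    have i3: "\<forall>Y'. indecomposable (opc C) Y' \<and> irr_minus_nonzero (opc C) (\<lambda>X Y. I Y X) Z Y' \<longrightarrow>
                 (\<exists>i<n. isomorphic (opc C) Y' (Ys i))"
      using h isomorphic_sym by (simp add: opc_irr_minus_nonzero) blast
    have i4: "\<forall>i<n. irr_minus_basis (opc C) (\<lambda>X Y. I Y X) Z (Ys i) (map (gc i) [0..<m i])"
      using h by (simp add: opc_irr_minus_basis)
    interpret P: p1 "opc C" "\<lambda>X Y. I Y X" Z Y n m Ys \<pi> \<iota> g gc
      by (rule p1.intro[OF kco], rule p1_axioms.intro) (use a h i1 i2 i3 i4 Zo opc_ideal in auto)
    show "sink_map C I Y Z g" using P.part1 by simp
  qed
qed


end
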